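(* Let $p\ge 2$, let $F$ be a distribution on $\mathbb{R}^p$, let $X\sim F$, let $X_1,X_2,\ldots$ be independent random vectors with distribution $F$, let $\mathbb{X}_n=(X_1,\ldots,X_n)^T$, let $t\in\mathbb{R}^p$, and let $(t_n)_{n\in\mathbb{N}}$ be a sequence of random $p$-vectors (defined on the same probability space as the $X_i$). Suppose that (I) $E|t_n-t|^4=O(n^{-2})$ as $n\to\infty$, (II) $E|X-t|^{-3/2}<\infty$, and (III) $\sqrt{n}\begin{pmatrix} t_n-t\\ \mathrm{vec}\{S_n(\mathbb{X}_n,t)-S(F,t)\}\end{pmatrix}\to N_{p+p^2}(0,\Xi)$ in distribution, for some symmetric $p(p+1)\times p(p+1)$ matrix $\Xi$. Then $\sqrt{n}\,\mathrm{vec}\{S_n(\mathbb{X}_n,t_n)-S(F,t)\}\to N_{p^2}(0,A\Xi A^T)$ in distribution, where $A=(B,\,I_{p^2})\in\mathbb{R}^{p^2\times p(p+1)}$, $I_{p^2}$ is the $p^2\times p^2$ identity matrix, and $B\in\mathbb{R}^{p^2\times p}$ is given by $$B=2E\left[\frac{\{(X-t)\otimes(X-t)\}(X-t)^T}{|X-t|^4}\right]-E\left\{\frac{X-t}{|X-t|^2}\right\}\otimes I_p-I_p\otimes E\left\{\frac{X-t}{|X-t|^2}\right\}.$$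
   Context: $|\cdot|$ denotes the Euclidean norm on $\mathbb{R}^p$; $\otimes$ denotes the Kronecker product. The spatial sign of $x\in\mathbb{R}^p$ is $s(x)=x/|x|$ for $x\neq 0$ and $s(0)=0$. For $X\sim F$ and $t\in\mathbb{R}^p$, $S(F,t)=E\{s(X-t)s(X-t)^T\}$. For a (possibly random) $u\in\mathbb{R}^p$, $S_n(\mathbb{X}_n,u)=\frac1n\sum_{i=1}^n s(X_i-u)s(X_i-u)^T$. For a matrix $M\in\mathbb{R}^{m\times n}$, $\mathrm{vec}\,M$ is the $mn$-vector obtained by stacking the columns of $M$ from left to right underneath each other. $N_k(0,\Sigma)$ denotes the $k$-variate normal distribution with mean $0$ and covariance $\Sigma$. *)

theory Defs
  imports "HOL-Probability.Probability"
begin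

text \<open>Spatial sign: the library's sgn on real vectors is exactly x / |x| with sgn 0 = 0.
  Outer product s(x) s(x)^T.\<close>
definition outer :: "real^'p \<Rightarrow> real^'p \<Rightarrow> real^'p^'p" where
  "outer a b = (\<chi> i j. a $ i * b $ j)"

definition sign_outer :: "real^'p \<Rightarrow> real^'p^'p" where
  "sign_outer x = outer (sgn x) (sgn x)"

definition S_pop :: "(real^'p) measure \<Rightarrow> real^'p \<Rightarrow> real^'p^'p" where
  "S_pop F t = (\<integral>x. sign_outer (x - t) \<partial>F)"

definition S_emp :: "(nat \<Rightarrow> 'a \<Rightarrow> real^'p) \<Rightarrow> nat \<Rightarrow> ('a \<Rightarrow> real^'p) \<Rightarrow> 'a \<Rightarrow> real^'p^'p" where
  "S_emp X n u \<omega> = (1 / real n) *\<^sub>R (\<Sum>i\<in>{1..n}. sign_outer (X i \<omega> - u \<omega>))"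

text \<open>vec of a matrix; the index (i,j) corresponds to linear position (j-1)m+i,
  i.e. columns stacked.\<close>
definition vecm :: "real^'n^'m \<Rightarrow> real^('m \<times> 'n)" where
  "vecm M = (\<chi> ij. M $ fst ij $ snd ij)"

text \<open>Kronecker product of column vectors a (m-vector) and b (r-vector), consistent with
  the index convention of vecm: entry (l,k) is at linear position (k-1)r+l and equals a_k b_l.\<close>
definition kron_vec :: "real^'m \<Rightarrow> real^'r \<Rightarrow> real^('r \<times> 'm)" where
  "kron_vec a b = (\<chi> lk. a $ snd lk * b $ fst lk)"

definition kron_vec_I :: "real^'p \<Rightarrow> real^'p^('p \<times> 'p)" where
  "kron_vec_I u = (\<chi> lk. \<chi> m. u $ snd lk * (if fst lk = m then 1 else 0))"

definition kron_I_vec :: "real^'p \<Rightarrow> real^'p^('p \<times> 'p)" where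
  "kron_I_vec u = (\<chi> lk. \<chi> m. (if snd lk = m then 1 else 0) * u $ fst lk)"

definition colrow :: "real^'m \<Rightarrow> real^'n \<Rightarrow> real^'n^'m" where
  "colrow v w = (\<chi> i j. v $ i * w $ j)"

definition B_mat :: "(real^'p) measure \<Rightarrow> real^'p \<Rightarrow> real^'p^('p \<times> 'p)" where
  "B_mat F t =
     2 *\<^sub>R (\<integral>x. (1 / norm (x - t) ^ 4) *\<^sub>R colrow (kron_vec (x - t) (x - t)) (x - t) \<partial>F)
     - kron_vec_I (\<integral>x. (1 / norm (x - t) ^ 2) *\<^sub>R (x - t) \<partial>F)
     - kron_I_vec (\<integral>x. (1 / norm (x - t) ^ 2) *\<^sub>R (x - t) \<partial>F)"

definition stack :: "real^'a \<Rightarrow> real^'b \<Rightarrow> real^('a + 'b)" where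
  "stack a b = (\<chi> k. case k of Inl i \<Rightarrow> a $ i | Inr j \<Rightarrow> b $ j)"

definition A_mat :: "real^'p^('p \<times> 'p) \<Rightarrow> real^('p + ('p \<times> 'p))^('p \<times> 'p)" where
  "A_mat B = (\<chi> r k. case k of Inl i \<Rightarrow> B $ r $ i | Inr j \<Rightarrow> (if r = j then 1 else 0))"

text \<open>N is the k-variate normal distribution N_k(0, Sigma): a Borel probability measure on R^k
  with characteristic function u \<mapsto> exp(-u^T Sigma u / 2) (covers degenerate Sigma).\<close>
definition is_normal_vec :: "real^'k^'k \<Rightarrow> (real^'k) measure \<Rightarrow> bool" where
  "is_normal_vec \<Sigma> N \<longleftrightarrow> prob_space N \<and> sets N = sets borel \<and>
     (\<forall>u. (CLINT x|N. cis (u \<bullet> x)) = complex_of_real (exp (- (u \<bullet> (\<Sigma> *v u)) / 2)))"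

definition conv_distr_normal :: "'a measure \<Rightarrow> (nat \<Rightarrow> 'a \<Rightarrow> real^'k) \<Rightarrow> real^'k^'k \<Rightarrow> bool" where
  "conv_distr_normal M Y \<Sigma> \<longleftrightarrow> (\<exists>N. is_normal_vec \<Sigma> N \<and>
     (\<forall>f :: real^'k \<Rightarrow> real. continuous_on UNIV f \<and> bounded (range f) \<longrightarrow>
        (\<lambda>n. \<integral>\<omega>. f (Y n \<omega>) \<partial>M) \<longlonglongrightarrow> (\<integral>x. f x \<partial>N)))"

end

theory Submission
  imports Defs
begin

lemma outer_row: "outer a b $ i = a $ i *\<^sub>R b"
  by (simp add: outer_def vec_eq_iff)

lemma norm_outer: "norm (outer a b) = norm a * norm (b::real^'n)"
proof -
  have "norm (outer a b)^2 = (norm a * norm b)^2"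
    unfolding power2_norm_eq_inner power_mult_distrib
    apply (simp add: inner_vec_def outer_row sum_distrib_right sum_distrib_left power2_eq_square mult.commute mult.left_commute)
    by (rule sum.swap)
  then show ?thesis by (simp add: power2_eq_iff_nonneg)
qed

lemma outer_diff_left: "outer (a - c) b = outer a b - outer c (b::real^'n)"
  by (simp add: outer_def vec_eq_iff algebra_simps)
lemma outer_diff_right: "outer a (b - c) = outer a b - outer a (c::real^'n)"
  by (simp add: outer_def vec_eq_iff algebra_simps)
lemma outer_scaleR_left: "outer (r *\<^sub>R a) b = r *\<^sub>R outer a (b::real^'n)"
  by (simp add: outer_def vec_eq_iff algebra_simps)
lemma outer_scaleR_right: "outer a (r *\<^sub>R b) = r *\<^sub>R outer a (b::real^'n)"
  by (simp add: outer_def vec_eq_iff algebra_simps)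

lemma norm_sign_outer_le: "norm (sign_outer x) \<le> 1"
  by (simp add: sign_outer_def norm_outer norm_sgn mult_le_one)

lemma norm_vecm: "norm (vecm M) = norm (M::real^'n^'m)"
proof -
  have "norm (vecm M)^2 = norm M ^2"
    unfolding power2_norm_eq_inner
    by (simp add: inner_vec_def vecm_def sum.cartesian_product case_prod_beta)
  then show ?thesis by (simp add: power2_eq_iff_nonneg)
qed

lemma vecm_linear: "vecm (a - b) = vecm a - vecm b" "vecm (a + b) = vecm a + vecm b"
  "vecm (r *\<^sub>R a) = r *\<^sub>R vecm a" "vecm 0 = 0"
  by (simp_all add: vecm_def vec_eq_iff)

lemma sgn_diff_bound:
  fixes y z :: "'a::real_normed_vector"
  assumes "y \<noteq> 0"
  shows "norm (sgn z - sgn y) \<le> 2 * norm (z - y) / norm y"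
proof (cases "z = 0")
  case True
  then show ?thesis using assms by (simp add: norm_sgn)
next
  case False
  have "sgn z - sgn y = (1/norm z - 1/norm y) *\<^sub>R z + (1/norm y) *\<^sub>R (z - y)"
    by (simp add: sgn_div_norm algebra_simps divide_inverse scaleR_diff_right)
  then have "norm (sgn z - sgn y) \<le> \<bar>1/norm z - 1/norm y\<bar> * norm z + norm (z - y) / norm y"
    by (metis (no_types, lifting) norm_scaleR norm_triangle_ineq abs_of_nonneg divide_inverse
        inverse_eq_divide inverse_nonnegative_iff_nonnegative mult.commute norm_ge_zero)
  also have "\<bar>1/norm z - 1/norm y\<bar> * norm z = \<bar>norm y - norm z\<bar> / norm y"
    using False assms by (simp add: field_simps abs_div)
  also have "\<dots> \<le> norm (z - y) / norm y"
    by (intro divide_right_mono) (auto, metis norm_minus_commute norm_triangle_ineq3)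
  finally show ?thesis by simp
qed

definition Dm :: "real^'p \<Rightarrow> real^'p \<Rightarrow> real^'p^'p" where
  "Dm y d = (2 * (y \<bullet> d) / norm y ^ 4) *\<^sub>R outer y y - (1 / norm y ^ 2) *\<^sub>R (outer d y + outer y d)"

definition Dmat :: "real^'p \<Rightarrow> real^'p^('p \<times> 'p)" where
  "Dmat y = 2 *\<^sub>R ((1 / norm y ^ 4) *\<^sub>R colrow (kron_vec y y) y)
     - kron_vec_I ((1 / norm y ^ 2) *\<^sub>R y) - kron_I_vec ((1 / norm y ^ 2) *\<^sub>R y)"

lemma Dmat_mult: "Dmat y *v d = vecm (Dm y d)"
  by (simp add: vec_eq_iff Dmat_def Dm_def matrix_vector_mult_def vecm_def colrow_def kron_vec_def
      kron_vec_I_def kron_I_vec_def outer_def inner_vec_def sum_distrib_left sum_subtractf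
      if_distrib[of "\<lambda>x. _ * x"] algebra_simps cong: if_cong)
    (simp add: sum.distrib sum_divide_distrib[symmetric] if_distrib[of "\<lambda>x. x / _"]
      sum.delta cong: if_cong)

lemma sign_outer_diff: "norm (sign_outer z - sign_outer y) \<le> 2 * norm (sgn z - sgn (y::real^'n))"
proof -
  have "sign_outer z - sign_outer y = outer (sgn z - sgn y) (sgn z) + outer (sgn y) (sgn z - sgn y)"
    by (simp add: sign_outer_def outer_diff_left outer_diff_right)
  then have "norm (sign_outer z - sign_outer y) \<le> norm (sgn z - sgn y) * norm (sgn z) + norm (sgn y) * norm (sgn z - sgn y)"
    by (metis norm_outer norm_triangle_ineq)
  also have "\<dots> \<le> norm (sgn z - sgn y) * 1 + 1 * norm (sgn z - sgn y)"
    by (intro add_mono mult_left_mono mult_right_mono) (auto simp: norm_sgn)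
  finally show ?thesis by simp
qed

lemma norm_Dm: "norm (Dm y d) \<le> 4 * norm d / norm y"
proof (cases "y = 0")
  case True then show ?thesis by (simp add: Dm_def)
next
  case False
  define r where "r = norm y"
  have r: "r > 0" using False by (simp add: r_def)
  have cs: "\<bar>y \<bullet> d\<bar> \<le> r * norm d" unfolding r_def by (rule Cauchy_Schwarz_ineq2)
  have r4: "r ^ 4 = (r * r) * (r * r)" by (simp add: power4_eq_xxxx)
  have "norm (Dm y d) \<le> norm ((2 * (y \<bullet> d) / norm y ^ 4) *\<^sub>R outer y y) + norm ((1 / norm y ^ 2) *\<^sub>R (outer d y + outer y d))"
    unfolding Dm_def by (rule norm_triangle_ineq4)
  also have "norm ((2 * (y \<bullet> d) / norm y ^ 4) *\<^sub>R outer y y) = 2 * \<bar>y \<bullet> d\<bar> / (r * r)"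
    using r by (simp add: norm_outer abs_mult r4 flip: r_def)
  also have "\<dots> \<le> 2 * (r * norm d) / (r * r)"
    using cs r by (intro divide_right_mono mult_left_mono) auto
  also have "\<dots> = 2 * norm d / r" using r by simp
  also have "norm ((1 / norm y ^ 2) *\<^sub>R (outer d y + outer y d)) = norm (outer d y + outer y d) / (r * r)"
    by (simp add: power2_eq_square flip: r_def)
  also have "\<dots> \<le> (2 * (r * norm d)) / (r * r)"
  proof -
    have "norm (outer d y + outer y d) \<le> norm d * r + r * norm d"
      unfolding r_def using norm_triangle_ineq[of "outer d y" "outer y d"] by (simp add: norm_outer)
    then show ?thesis by (intro divide_right_mono) auto
  qed
  also have "(2 * (r * norm d)) / (r * r) = 2 * norm d / r" using r by simp
  finally show ?thesis by (simp add: r_def)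
qed

lemma scalar_ident:
  fixes yi yj di dj s D Y E Q :: real
  assumes "Y \<noteq> 0" "E \<noteq> 0" "D = E - Y + 2 * s" "Q = Y * Y"
  shows "(yi - di) * (yj - dj) / E - yi * yj / Y - (2 * s / Q * (yi * yj) - (di * yj + yi * dj) / Y)
    = di * dj / Y - D / (E * Y) * ((yi - di) * (yj - dj)) + 2 * s / Y * ((yi - di) * (yj - dj) / E - yi * yj / Y)"
  unfolding assms(3,4) using assms(1,2) by (simp add: field_simps power2_eq_square)

lemma rem_ident:
  fixes y d :: "real^'n"
  assumes y: "y \<noteq> 0" and z: "y - d \<noteq> 0"
  shows "sign_outer (y - d) - sign_outer y - Dm y d =
    (1 / norm y ^ 2) *\<^sub>R outer d d - (norm d ^ 2 / (norm (y - d) ^ 2 * norm y ^ 2)) *\<^sub>R outer (y - d) (y - d)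
    + (2 * (y \<bullet> d) / norm y ^ 2) *\<^sub>R (sign_outer (y - d) - sign_outer y)"
proof -
  have E: "norm d ^ 2 = norm (y - d) ^ 2 - norm y ^ 2 + 2 * (y \<bullet> d)"
    by (simp add: power2_norm_eq_inner inner_diff inner_commute)
  have Y: "norm y ^ 2 \<noteq> 0" "norm (y - d) ^ 2 \<noteq> 0" using y z by auto
  have p4: "norm y ^ 4 = norm y ^ 2 * norm y ^ 2" by simp
  have so: "sign_outer x $ i $ j = x $ i * x $ j / norm x ^ 2" for x :: "real^'n" and i j
    by (simp add: sign_outer_def outer_def sgn_div_norm power2_eq_square divide_inverse mult_ac)
  show ?thesis
    unfolding vec_eq_iff
  proof (intro allI)
    fix i j
    show "(sign_outer (y - d) - sign_outer y - Dm y d) $ i $ j = ((1 / norm y ^ 2) *\<^sub>R outer d d - (norm d ^ 2 / (norm (y - d) ^ 2 * norm y ^ 2)) *\<^sub>R outer (y - d) (y - d)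
      + (2 * (y \<bullet> d) / norm y ^ 2) *\<^sub>R (sign_outer (y - d) - sign_outer y)) $ i $ j"
      using scalar_ident[OF Y(1) Y(2) E p4, of "y$i" "d$i" "y$j" "d$j"]
      by (simp add: so Dm_def outer_def algebra_simps add_divide_distrib diff_divide_distrib)
  qed
qed

lemma rem_bound:
  fixes y d :: "real^'n"
  assumes y: "y \<noteq> 0"
  shows "norm (sign_outer (y - d) - sign_outer y - Dm y d) \<le> 16 * (norm d / norm y) powr (3/2)"
proof -
  define \<rho> where "\<rho> = norm d / norm y"
  have r: "norm y > 0" using y by simp
  have \<rho>0: "\<rho> \<ge> 0" by (simp add: \<rho>_def)
  have pw: "\<rho> powr (3/2) = \<rho> * sqrt \<rho>"
  proof (cases "\<rho> = 0")
    case False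
    have "\<rho> powr (3/2) = \<rho> powr (1 + 1/2)" by simp
    also have "\<dots> = \<rho> * \<rho> powr (1/2)" unfolding powr_add using False \<rho>0 by simp
    finally show ?thesis using \<rho>0 by (simp add: powr_half_sqrt)
  qed simp
  show ?thesis
  proof (cases "\<rho> \<ge> 1/2")
    case True
    have "norm (sign_outer (y - d) - sign_outer y - Dm y d) \<le> norm (sign_outer (y - d)) + norm (sign_outer y) + norm (Dm y d)"
      by (meson norm_triangle_ineq4 add_mono order_trans order_refl)
    also have "\<dots> \<le> 1 + 1 + 4 * \<rho>"
      using norm_sign_outer_le[of "y - d"] norm_sign_outer_le[of y] norm_Dm[of y d] by (simp add: \<rho>_def)
    also have "\<dots> \<le> 16 * (\<rho> * sqrt \<rho>)"
    proof -
      have "sqrt (1/2) \<le> sqrt \<rho>" using True by simp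
      moreover have "7/10 \<le> sqrt (1/2::real)" by (rule real_le_rsqrt) (simp add: power2_eq_square)
      ultimately have "7/10 \<le> sqrt \<rho>" by linarith
      then have "\<rho> * (7/10) \<le> \<rho> * sqrt \<rho>" using \<rho>0 by (intro mult_left_mono)
      then show ?thesis using True by linarith
    qed
    finally have "norm (sign_outer (y - d) - sign_outer y - Dm y d) \<le> 16 * (\<rho> * sqrt \<rho>)" .
    then have "norm (sign_outer (y - d) - sign_outer y - Dm y d) \<le> 16 * \<rho> powr (3/2)" by (simp only: pw)
    then show ?thesis unfolding \<rho>_def .
  next
    case False
    have dl: "norm d < norm y / 2" using False r by (simp add: \<rho>_def field_simps)
    have zn: "norm (y - d) \<ge> norm y / 2" using norm_triangle_ineq2[of y d] dl by linarith
    then have z: "y - d \<noteq> 0" using r by auto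
    have "norm (sign_outer (y - d) - sign_outer y - Dm y d) \<le>
      norm ((1 / norm y ^ 2) *\<^sub>R outer d d) + norm ((norm d ^ 2 / (norm (y - d) ^ 2 * norm y ^ 2)) *\<^sub>R outer (y - d) (y - d))
      + norm ((2 * (y \<bullet> d) / norm y ^ 2) *\<^sub>R (sign_outer (y - d) - sign_outer y))"
      unfolding rem_ident[OF y z] by (meson norm_triangle_ineq4 norm_triangle_ineq add_mono order_trans order_refl)
    also have "norm ((1 / norm y ^ 2) *\<^sub>R outer d d) = \<rho>^2"
      by (simp add: norm_outer \<rho>_def power2_eq_square)
    also have "norm ((norm d ^ 2 / (norm (y - d) ^ 2 * norm y ^ 2)) *\<^sub>R outer (y - d) (y - d)) = \<rho>^2"
      using z r by (simp add: norm_outer \<rho>_def power2_eq_square)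
    finally have L: "norm (sign_outer (y - d) - sign_outer y - Dm y d) \<le> \<rho>^2 + \<rho>^2 + norm ((2 * (y \<bullet> d) / norm y ^ 2) *\<^sub>R (sign_outer (y - d) - sign_outer y))" .
    have T3: "norm ((2 * (y \<bullet> d) / norm y ^ 2) *\<^sub>R (sign_outer (y - d) - sign_outer y)) \<le> 8 * \<rho>^2"
    proof -
      have a: "\<bar>2 * (y \<bullet> d) / norm y ^ 2\<bar> \<le> 2 * \<rho>"
        using Cauchy_Schwarz_ineq2[of y d] r by (simp add: \<rho>_def power2_eq_square abs_mult field_simps)
      have b: "norm (sign_outer (y - d) - sign_outer y) \<le> 4 * \<rho>"
        using sign_outer_diff[of "y - d" y] sgn_diff_bound[OF y, of "y - d"] by (simp add: \<rho>_def)
      have "norm ((2 * (y \<bullet> d) / norm y ^ 2) *\<^sub>R (sign_outer (y - d) - sign_outer y)) \<le> (2 * \<rho>) * (4 * \<rho>)"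
        unfolding norm_scaleR using a b \<rho>0 by (intro mult_mono) auto
      then show ?thesis by (simp add: power2_eq_square)
    qed
    have "\<rho>^2 + \<rho>^2 + 8 * \<rho>^2 \<le> 16 * (\<rho> * sqrt \<rho>)"
    proof -
      have "\<rho> \<le> sqrt \<rho>" using False \<rho>0 by (intro real_le_rsqrt) (simp add: power2_eq_square mult_left_le_one_le)
      then have "\<rho> * \<rho> \<le> \<rho> * sqrt \<rho>" using \<rho>0 by (intro mult_left_mono)
      then show ?thesis unfolding power2_eq_square using mult_nonneg_nonneg[OF \<rho>0 \<rho>0] by linarith
    qed
    with L T3 have "norm (sign_outer (y - d) - sign_outer y - Dm y d) \<le> 16 * (\<rho> * sqrt \<rho>)" by linarith
    then have "norm (sign_outer (y - d) - sign_outer y - Dm y d) \<le> 16 * \<rho> powr (3/2)" by (simp only: pw)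
    then show ?thesis unfolding \<rho>_def .
  qed
qed

lemma tight_conv:
  fixes Y :: "nat \<Rightarrow> 'a \<Rightarrow> real^'k"
  assumes M: "prob_space M" and Ym: "\<And>n. Y n \<in> borel_measurable M"
    and c: "conv_distr_normal M Y \<Sigma>" and g0: "\<gamma> > 0"
  shows "\<exists>K. \<forall>\<^sub>F n in sequentially. measure M {\<omega>\<in>space M. K \<le> norm (Y n \<omega>)} \<le> \<gamma>"
proof -
  interpret M: prob_space M by (rule M)
  obtain N where N: "is_normal_vec \<Sigma> N" and lim: "\<And>f :: real^'k \<Rightarrow> real. continuous_on UNIV f \<Longrightarrow> bounded (range f) \<Longrightarrow>
        (\<lambda>n. \<integral>\<omega>. f (Y n \<omega>) \<partial>M) \<longlonglongrightarrow> (\<integral>x. f x \<partial>N)"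
    using c unfolding conv_distr_normal_def by blast
  have Np: "prob_space N" and Ns: "sets N = sets borel" using N by (auto simp: is_normal_vec_def)
  interpret N: prob_space N by (rule Np)
  define g where "g m x = min 1 (max 0 (norm x - real m))" for m :: nat and x :: "real^'k"
  have gc: "continuous_on UNIV (g m)" for m unfolding g_def by (intro continuous_intros)
  have gb: "bounded (range (g m))" for m unfolding g_def bounded_iff by (intro exI[of _ 1]) auto
  have gm: "g m \<in> borel_measurable N" for m
    using borel_measurable_continuous_onI[OF gc] measurable_cong_sets[OF Ns refl] by blast
  have "(\<lambda>m. \<integral>x. g m x \<partial>N) \<longlonglongrightarrow> (\<integral>x. 0 \<partial>N)"
  proof (rule integral_dominated_convergence[where w="\<lambda>_. 1"])
    show "AE x in N. (\<lambda>m. g m x) \<longlonglongrightarrow> 0"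
    proof (intro AE_I2 tendsto_eventually)
      fix x :: "real^'k"
      show "\<forall>\<^sub>F m in sequentially. g m x = 0"
        unfolding eventually_sequentially
      proof (intro exI[of _ "nat \<lceil>norm x\<rceil>"] allI impI)
        fix n assume "nat \<lceil>norm x\<rceil> \<le> n"
        then have "norm x \<le> real n"
        proof -
          have "\<lceil>norm x\<rceil> \<le> int n" using \<open>nat \<lceil>norm x\<rceil> \<le> n\<close> by (simp add: nat_le_iff)
          then show ?thesis using ceiling_le_iff[of "norm x" "int n"] by simp
        qed
        then show "g n x = 0" by (simp add: g_def)
      qed
    qed
    show "AE x in N. norm (g m x) \<le> 1" for m by (auto simp: g_def)
  qed (auto simp: gm)
  then have "\<forall>\<^sub>F m in sequentially. (\<integral>x. g m x \<partial>N) < \<gamma> / 2"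
    using g0 by (intro order_tendstoD) auto
  then obtain m where m: "(\<integral>x. g m x \<partial>N) < \<gamma> / 2"
    by (auto simp: eventually_sequentially)
  have "\<forall>\<^sub>F n in sequentially. (\<integral>\<omega>. g m (Y n \<omega>) \<partial>M) < \<gamma>"
  proof -
    have "(\<integral>x. g m x \<partial>N) < \<gamma>" using m g0 by linarith
    from order_tendstoD(2)[OF lim[OF gc gb] this] show ?thesis .
  qed
  moreover have "measure M {\<omega>\<in>space M. real m + 1 \<le> norm (Y n \<omega>)} \<le> (\<integral>\<omega>. g m (Y n \<omega>) \<partial>M)" for n
  proof -
    have gY: "(\<lambda>\<omega>. g m (Y n \<omega>)) \<in> borel_measurable M"
      using borel_measurable_continuous_onI[OF gc] Ym by measurable
    have S: "{\<omega>\<in>space M. real m + 1 \<le> norm (Y n \<omega>)} \<in> sets M"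
      using Ym by measurable
    have "measure M {\<omega>\<in>space M. real m + 1 \<le> norm (Y n \<omega>)} = (\<integral>\<omega>. indicator {\<omega>\<in>space M. real m + 1 \<le> norm (Y n \<omega>)} \<omega> \<partial>M)"
      by (simp add: Int_absorb2)
    also have "\<dots> \<le> (\<integral>\<omega>. g m (Y n \<omega>) \<partial>M)"
    proof (rule integral_mono)
      show "integrable M (\<lambda>\<omega>. g m (Y n \<omega>))"
        by (rule M.integrable_const_bound[where B=1]) (auto simp: gY, auto simp: g_def)
      show "integrable M (indicator {\<omega>\<in>space M. real m + 1 \<le> norm (Y n \<omega>)} :: _ \<Rightarrow> real)"
        using S by (intro integrable_real_indicator) (auto simp: M.emeasure_finite less_top[symmetric])
      show "indicator {\<omega>\<in>space M. real m + 1 \<le> norm (Y n \<omega>)} \<omega> \<le> g m (Y n \<omega>)" for \<omega>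
        by (auto simp: g_def indicator_def)
    qed
    finally show ?thesis .
  qed
  ultimately have "\<forall>\<^sub>F n in sequentially. measure M {\<omega>\<in>space M. real m + 1 \<le> norm (Y n \<omega>)} \<le> \<gamma>"
    by (auto elim!: eventually_mono intro: order_trans less_imp_le)
  then show ?thesis by blast
qed

definition small_prob :: "'a measure \<Rightarrow> (nat \<Rightarrow> 'a \<Rightarrow> 'b::real_normed_vector) \<Rightarrow> bool" where
  "small_prob M R \<longleftrightarrow> (\<forall>e>0. \<forall>\<gamma>>0. \<forall>\<^sub>F n in sequentially. measure M {\<omega>\<in>space M. e \<le> norm (R n \<omega>)} \<le> \<gamma>)"

lemma slutsky:
  fixes Y R :: "nat \<Rightarrow> 'a \<Rightarrow> real^'k"
  assumes M: "prob_space M" and Ym: "\<And>n. Y n \<in> borel_measurable M" and Rm: "\<And>n. R n \<in> borel_measurable M"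
    and c: "conv_distr_normal M Y \<Sigma>" and sm: "small_prob M R"
  shows "conv_distr_normal M (\<lambda>n \<omega>. Y n \<omega> + R n \<omega>) \<Sigma>"
proof -
  interpret M: prob_space M by (rule M)
  obtain N where N: "is_normal_vec \<Sigma> N" and lim: "\<And>f :: real^'k \<Rightarrow> real. continuous_on UNIV f \<Longrightarrow> bounded (range f) \<Longrightarrow>
        (\<lambda>n. \<integral>\<omega>. f (Y n \<omega>) \<partial>M) \<longlonglongrightarrow> (\<integral>x. f x \<partial>N)"
    using c unfolding conv_distr_normal_def by blast
  show ?thesis unfolding conv_distr_normal_def
  proof (intro exI[of _ N] conjI N allI impI)
    fix f :: "real^'k \<Rightarrow> real"
    assume fcb: "continuous_on UNIV f \<and> bounded (range f)"
    then have fc: "continuous_on UNIV f" and fb: "bounded (range f)" by auto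
    obtain B where B: "\<And>x. \<bar>f x\<bar> \<le> B" using fb unfolding bounded_iff by auto
    have B0: "B \<ge> 0" using B[of 0] by linarith
    have fm: "f \<in> borel_measurable borel" using borel_measurable_continuous_onI[OF fc] .
    have dif: "(\<lambda>n. (\<integral>\<omega>. f (Y n \<omega> + R n \<omega>) \<partial>M) - (\<integral>\<omega>. f (Y n \<omega>) \<partial>M)) \<longlonglongrightarrow> 0"
      unfolding tendsto_iff
    proof (intro allI impI)
      fix \<epsilon> :: real assume e: "\<epsilon> > 0"
      define \<gamma> where "\<gamma> = \<epsilon> / (8 * (B + 1))"
      have g0: "\<gamma> > 0" using e B0 by (simp add: \<gamma>_def)
      have gB: "2 * B * (\<gamma> + \<gamma>) < \<epsilon> / 2"
      proof -
        have "2 * B * (\<gamma> + \<gamma>) = (\<epsilon> / 2) * (B / (B + 1))"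
        proof -
          have key: "2 * B * (\<epsilon> / (8 * c) + \<epsilon> / (8 * c)) = (\<epsilon> / 2) * (B / c)" if "c > 0" for c :: real
            using that by (simp add: field_simps)
          show ?thesis unfolding \<gamma>_def using B0 by (intro key) linarith
        qed
        also have "\<dots> < (\<epsilon> / 2) * 1"
          using e B0 by (intro mult_strict_left_mono) auto
        finally show ?thesis by simp
      qed
      obtain K where K: "\<forall>\<^sub>F n in sequentially. measure M {\<omega>\<in>space M. K \<le> norm (Y n \<omega>)} \<le> \<gamma>"
        using tight_conv[OF M Ym c g0] by blast
      define Kp where "Kp = \<bar>K\<bar>"
      have "uniformly_continuous_on (cball 0 (Kp + 1)) f"
        by (intro compact_uniformly_continuous continuous_on_subset[OF fc]) auto
      then obtain d where d0: "d > 0" and d: "\<And>x x'. x \<in> cball 0 (Kp+1) \<Longrightarrow> x' \<in> cball 0 (Kp+1) \<Longrightarrow> dist x' x < d \<Longrightarrow> dist (f x') (f x) < \<epsilon> / 2"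
        unfolding uniformly_continuous_on_def using e by (metis half_gt_zero)
      define d' where "d' = min d 1"
      have d'0: "d' > 0" using d0 by (simp add: d'_def)
      have Rs: "\<forall>\<^sub>F n in sequentially. measure M {\<omega>\<in>space M. d' \<le> norm (R n \<omega>)} \<le> \<gamma>"
        using sm d'0 g0 unfolding small_prob_def by blast
      show "\<forall>\<^sub>F n in sequentially. dist ((\<integral>\<omega>. f (Y n \<omega> + R n \<omega>) \<partial>M) - (\<integral>\<omega>. f (Y n \<omega>) \<partial>M)) 0 < \<epsilon>"
        using K Rs
      proof eventually_elim
        case (elim n)
        define A1 where "A1 = {\<omega>\<in>space M. K \<le> norm (Y n \<omega>)}"
        define A2 where "A2 = {\<omega>\<in>space M. d' \<le> norm (R n \<omega>)}"
        have A1m: "A1 \<in> sets M" unfolding A1_def using Ym by measurable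
        have A2m: "A2 \<in> sets M" unfolding A2_def using Rm by measurable
        have m1: "(\<lambda>\<omega>. f (Y n \<omega> + R n \<omega>)) \<in> borel_measurable M"
          using fm Ym Rm by measurable
        have m2: "(\<lambda>\<omega>. f (Y n \<omega>)) \<in> borel_measurable M"
          using fm Ym by measurable
        have i1: "integrable M (\<lambda>\<omega>. f (Y n \<omega> + R n \<omega>))"
          by (rule M.integrable_const_bound[where B=B]) (use B m1 in auto)
        have i2: "integrable M (\<lambda>\<omega>. f (Y n \<omega>))"
          by (rule M.integrable_const_bound[where B=B]) (use B m2 in auto)
        have iA: "integrable M (indicator (A1 \<union> A2) :: _ \<Rightarrow> real)"
          using A1m A2m by (intro integrable_real_indicator) (auto simp: M.emeasure_finite less_top[symmetric])
        have "\<bar>(\<integral>\<omega>. f (Y n \<omega> + R n \<omega>) \<partial>M) - (\<integral>\<omega>. f (Y n \<omega>) \<partial>M)\<bar> = \<bar>\<integral>\<omega>. f (Y n \<omega> + R n \<omega>) - f (Y n \<omega>) \<partial>M\<bar>"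
          using i1 i2 by simp
        also have "\<dots> \<le> (\<integral>\<omega>. \<bar>f (Y n \<omega> + R n \<omega>) - f (Y n \<omega>)\<bar> \<partial>M)"
          by (rule integral_abs_bound)
        also have "\<dots> \<le> (\<integral>\<omega>. \<epsilon> / 2 + 2 * B * indicator (A1 \<union> A2) \<omega> \<partial>M)"
        proof (rule integral_mono)
          show "integrable M (\<lambda>\<omega>. \<bar>f (Y n \<omega> + R n \<omega>) - f (Y n \<omega>)\<bar>)"
            using i1 i2 by auto
          show "integrable M (\<lambda>\<omega>. \<epsilon> / 2 + 2 * B * indicator (A1 \<union> A2) \<omega>)"
            using iA by auto
          fix \<omega> assume \<omega>: "\<omega> \<in> space M"
          show "\<bar>f (Y n \<omega> + R n \<omega>) - f (Y n \<omega>)\<bar> \<le> \<epsilon> / 2 + 2 * B * indicator (A1 \<union> A2) \<omega>"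
          proof (cases "\<omega> \<in> A1 \<union> A2")
            case True
            have "\<bar>f (Y n \<omega> + R n \<omega>) - f (Y n \<omega>)\<bar> \<le> 2 * B"
              using B[of "Y n \<omega> + R n \<omega>"] B[of "Y n \<omega>"] by linarith
            then show ?thesis using True e by simp
          next
            case False
            then have y: "norm (Y n \<omega>) < K" and r: "norm (R n \<omega>) < d'"
              using \<omega> by (auto simp: A1_def A2_def)
            have "Y n \<omega> \<in> cball 0 (Kp + 1)" using y by (simp add: Kp_def)
            moreover have "Y n \<omega> + R n \<omega> \<in> cball 0 (Kp + 1)"
              using y r norm_triangle_ineq[of "Y n \<omega>" "R n \<omega>"] by (simp add: Kp_def d'_def, linarith)
            moreover have "dist (Y n \<omega> + R n \<omega>) (Y n \<omega>) < d"
              using r by (simp add: dist_norm d'_def)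
            ultimately have "dist (f (Y n \<omega> + R n \<omega>)) (f (Y n \<omega>)) < \<epsilon> / 2" by (rule d)
            then show ?thesis using False by (simp add: dist_real_def)
          qed
        qed
        also have "\<dots> = \<epsilon> / 2 + 2 * B * measure M (A1 \<union> A2)"
          using iA A1m A2m by (simp add: Int_absorb2 sets.sets_into_space M.prob_space)
        also have "\<dots> \<le> \<epsilon> / 2 + 2 * B * (\<gamma> + \<gamma>)"
        proof -
          have "measure M (A1 \<union> A2) \<le> measure M A1 + measure M A2"
            using A1m A2m by (intro measure_Un_le)
          also have "\<dots> \<le> \<gamma> + \<gamma>" using elim by (simp add: A1_def A2_def)
          finally show ?thesis using B0 by (intro add_left_mono mult_left_mono) auto
        qed
        also have "\<dots> < \<epsilon>" using gB by linarith
        finally show ?case by (simp add: dist_real_def)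
      qed
    qed
    have "(\<lambda>n. (\<integral>\<omega>. f (Y n \<omega>) \<partial>M) + ((\<integral>\<omega>. f (Y n \<omega> + R n \<omega>) \<partial>M) - (\<integral>\<omega>. f (Y n \<omega>) \<partial>M))) \<longlonglongrightarrow> (\<integral>x. f x \<partial>N) + 0"
      by (intro tendsto_add lim[OF fc fb] dif)
    then show "(\<lambda>n. \<integral>\<omega>. f (Y n \<omega> + R n \<omega>) \<partial>M) \<longlonglongrightarrow> (\<integral>x. f x \<partial>N)" by simp
  qed
qed

lemma conv_linear:
  fixes W :: "nat \<Rightarrow> 'a \<Rightarrow> real^'k" and A :: "real^'k^'m"
  assumes c: "conv_distr_normal M W \<Xi>"
  shows "conv_distr_normal M (\<lambda>n \<omega>. A *v W n \<omega>) (A ** \<Xi> ** transpose A)"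
proof -
  obtain N where N: "is_normal_vec \<Xi> N" and lim: "\<And>f :: real^'k \<Rightarrow> real. continuous_on UNIV f \<Longrightarrow> bounded (range f) \<Longrightarrow>
        (\<lambda>n. \<integral>\<omega>. f (W n \<omega>) \<partial>M) \<longlonglongrightarrow> (\<integral>x. f x \<partial>N)"
    using c unfolding conv_distr_normal_def by blast
  have Np: "prob_space N" and Ns: "sets N = sets borel"
    and cf: "\<And>u. (CLINT x|N. cis (u \<bullet> x)) = complex_of_real (exp (- (u \<bullet> (\<Xi> *v u)) / 2))"
    using N by (auto simp: is_normal_vec_def)
  have Ac: "continuous_on UNIV (\<lambda>x. A *v x)"
    using linear_continuous_on[OF matrix_vector_mul_bounded_linear[of A]] by simp
  have Am: "(\<lambda>x. A *v x) \<in> measurable N borel"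
    using borel_measurable_continuous_onI[OF Ac] measurable_cong_sets[OF Ns refl] by blast
  define N' where "N' = distr N borel (\<lambda>x. A *v x)"
  have "is_normal_vec (A ** \<Xi> ** transpose A) N'"
    unfolding is_normal_vec_def
  proof (intro conjI allI)
    show "prob_space N'" unfolding N'_def using Np Am by (intro prob_space.prob_space_distr) auto
    show "sets N' = sets borel" by (simp add: N'_def)
    fix u :: "real^'m"
    have cm: "(\<lambda>x. cis (u \<bullet> x)) \<in> borel_measurable borel" by (intro borel_measurable_continuous_onI continuous_intros)
    have "(CLINT x|N'. cis (u \<bullet> x)) = (CLINT x|N. cis (u \<bullet> (A *v x)))"
      unfolding N'_def by (rule integral_distr[OF Am cm])
    also have "\<dots> = (CLINT x|N. cis ((transpose A *v u) \<bullet> x))"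
      by (simp add: dot_lmul_matrix)
    also have "\<dots> = complex_of_real (exp (- ((transpose A *v u) \<bullet> (\<Xi> *v (transpose A *v u))) / 2))"
      by (rule cf)
    also have "(transpose A *v u) \<bullet> (\<Xi> *v (transpose A *v u)) = u \<bullet> ((A ** \<Xi> ** transpose A) *v u)"
      by (simp add: dot_lmul_matrix matrix_vector_mul_assoc[symmetric])
    finally show "(CLINT x|N'. cis (u \<bullet> x)) = complex_of_real (exp (- (u \<bullet> ((A ** \<Xi> ** transpose A) *v u)) / 2))" .
  qed
  moreover have "(\<lambda>n. \<integral>\<omega>. f (A *v W n \<omega>) \<partial>M) \<longlonglongrightarrow> (\<integral>x. f x \<partial>N')"
    if f: "continuous_on UNIV f" "bounded (range f)" for f :: "real^'m \<Rightarrow> real"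
  proof -
    have fm: "f \<in> borel_measurable borel" using borel_measurable_continuous_onI[OF f(1)] .
    have "(\<integral>x. f x \<partial>N') = (\<integral>x. f (A *v x) \<partial>N)"
      unfolding N'_def by (rule integral_distr[OF Am fm])
    moreover have "(\<lambda>n. \<integral>\<omega>. (\<lambda>x. f (A *v x)) (W n \<omega>) \<partial>M) \<longlonglongrightarrow> (\<integral>x. (\<lambda>x. f (A *v x)) x \<partial>N)"
    proof (rule lim)
      show "continuous_on UNIV (\<lambda>x. f (A *v x))"
        by (rule continuous_on_compose2[OF f(1) Ac]) auto
      show "bounded (range (\<lambda>x. f (A *v x)))"
        using f(2) by (rule bounded_subset) auto
    qed
    ultimately show ?thesis by simp
  qed
  ultimately show ?thesis unfolding conv_distr_normal_def by blast
qed

lemma var_sum_indep: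
  fixes c :: "nat \<Rightarrow> 'a \<Rightarrow> real"
  assumes M: "prob_space M" and ind: "prob_space.indep_vars M (\<lambda>_. borel) c UNIV"
    and cm: "\<And>i. c i \<in> borel_measurable M"
    and cb: "\<And>i \<omega>. \<bar>c i \<omega>\<bar> \<le> C" and c0: "\<And>i. (\<integral>\<omega>. c i \<omega> \<partial>M) = 0"
  shows "(\<integral>\<omega>. (\<Sum>i\<in>I. c i \<omega>)^2 \<partial>M) \<le> real (card I) * C^2"
proof -
  interpret M: prob_space M by (rule M)
  note cm[measurable]
  have ci: "integrable M (c i)" for i by (rule M.integrable_const_bound[where B=C]) (auto simp: cb cm)
  have cci: "integrable M (\<lambda>\<omega>. c i \<omega> * c j \<omega>)" for i j
  proof (rule M.integrable_const_bound[where B="C*C"])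
    have C0: "0 \<le> C" using cb[of i undefined] by linarith
    show "AE \<omega> in M. norm (c i \<omega> * c j \<omega>) \<le> C * C"
      by (intro AE_I2) (simp add: abs_mult mult_mono[OF cb cb C0 abs_ge_zero])
  qed simp
  have off: "(\<integral>\<omega>. c i \<omega> * c j \<omega> \<partial>M) = 0" if "i \<noteq> j" for i j
  proof -
    have "M.indep_vars (\<lambda>_. borel) c {i, j}" by (rule M.indep_vars_subset[OF ind]) auto
    then have "(\<integral>\<omega>. (\<Prod>k\<in>{i,j}. c k \<omega>) \<partial>M) = (\<Prod>k\<in>{i,j}. \<integral>\<omega>. c k \<omega> \<partial>M)"
      by (intro M.indep_vars_lebesgue_integral) (auto simp: ci)
    then show ?thesis using that by (simp add: c0)
  qed
  have "(\<integral>\<omega>. (\<Sum>i\<in>I. c i \<omega>)^2 \<partial>M) = (\<integral>\<omega>. (\<Sum>i\<in>I. \<Sum>j\<in>I. c i \<omega> * c j \<omega>) \<partial>M)"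
    by (simp add: power2_eq_square sum_product)
  also have "\<dots> = (\<Sum>i\<in>I. \<Sum>j\<in>I. \<integral>\<omega>. c i \<omega> * c j \<omega> \<partial>M)"
    by (simp add: integral_sum cci)
  also have "\<dots> = (\<Sum>i\<in>I. \<integral>\<omega>. c i \<omega> * c i \<omega> \<partial>M)"
  proof (cases "finite I")
    case True
    show ?thesis
    proof (rule sum.cong[OF refl])
      fix i assume i: "i \<in> I"
      have "(\<Sum>j\<in>I. \<integral>\<omega>. c i \<omega> * c j \<omega> \<partial>M) = (\<Sum>j\<in>{i}. \<integral>\<omega>. c i \<omega> * c j \<omega> \<partial>M)"
        using True i off by (intro sum.mono_neutral_right) auto
      then show "(\<Sum>j\<in>I. \<integral>\<omega>. c i \<omega> * c j \<omega> \<partial>M) = (\<integral>\<omega>. c i \<omega> * c i \<omega> \<partial>M)" by simp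
    qed
  qed simp
  also have "\<dots> \<le> (\<Sum>i\<in>I. C^2)"
  proof (rule sum_mono)
    fix i
    have "(\<integral>\<omega>. c i \<omega> * c i \<omega> \<partial>M) \<le> (\<integral>\<omega>. C^2 \<partial>M)"
    proof (rule integral_mono)
      show "c i \<omega> * c i \<omega> \<le> C^2" for \<omega>
      proof -
        have C0: "0 \<le> C" using cb[of i \<omega>] by linarith
        have "\<bar>c i \<omega>\<bar> * \<bar>c i \<omega>\<bar> \<le> C * C" by (rule mult_mono[OF cb cb C0 abs_ge_zero])
        then show ?thesis by (simp add: power2_eq_square abs_mult[symmetric])
      qed
    qed (auto simp: cci)
    then show "(\<integral>\<omega>. c i \<omega> * c i \<omega> \<partial>M) \<le> C^2" by (simp add: M.prob_space)
  qed
  also have "\<dots> = real (card I) * C^2" by simp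
  finally show ?thesis .
qed

lemma wlln_real:
  fixes X :: "nat \<Rightarrow> 'a \<Rightarrow> 'b" and g :: "'b \<Rightarrow> real"
  assumes M: "prob_space M" and Xm: "\<And>i. X i \<in> measurable M S" and Xd: "\<And>i. distr M S (X i) = F"
    and ind: "prob_space.indep_vars M (\<lambda>_. S) X UNIV"
    and gm: "g \<in> borel_measurable S" and gi: "integrable F g"
    and \<eta>: "\<eta> > 0" and \<gamma>: "\<gamma> > 0"
  shows "\<forall>\<^sub>F n in sequentially. measure M {\<omega>\<in>space M. \<eta> \<le> \<bar>(1 / real n) * (\<Sum>i\<in>{1..n}. g (X i \<omega>)) - (\<integral>x. g x \<partial>F)\<bar>} \<le> \<gamma>"
proof -
  interpret M: prob_space M by (rule M)
  note Xm[measurable] gm[measurable]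
  have FS: "sets F = sets S" using Xd[of 0] by auto
  have Fp: "prob_space F" using Xd[of 0] M.prob_space_distr[OF Xm[of 0]] by simp
  interpret F: prob_space F by (rule Fp)
  have intX: "(\<integral>\<omega>. f (X i \<omega>) \<partial>M) = (\<integral>x. f x \<partial>F)" if "f \<in> borel_measurable S" for f :: "'b \<Rightarrow> real" and i
    using integral_distr[OF Xm[of i] that] unfolding Xd[of i] by simp
  define tr where "tr L x = (if \<bar>g x\<bar> \<le> real L then g x else 0)" for L :: nat and x
  have trm: "tr L \<in> borel_measurable S" for L unfolding tr_def by measurable
  have trmF: "tr L \<in> borel_measurable F" for L using trm[of L] measurable_cong_sets[OF FS refl] by blast
  have gmF: "g \<in> borel_measurable F" using gm measurable_cong_sets[OF FS refl] by blast
  have "(\<lambda>L. \<integral>x. \<bar>g x - tr L x\<bar> \<partial>F) \<longlonglongrightarrow> (\<integral>x. 0 \<partial>F)"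
  proof (rule integral_dominated_convergence[where w="\<lambda>x. \<bar>g x\<bar>"])
    show "AE x in F. (\<lambda>L. \<bar>g x - tr L x\<bar>) \<longlonglongrightarrow> 0"
    proof (intro AE_I2 tendsto_eventually)
      fix x
      show "\<forall>\<^sub>F L in sequentially. \<bar>g x - tr L x\<bar> = 0"
        unfolding eventually_sequentially
      proof (intro exI[of _ "nat \<lceil>\<bar>g x\<bar>\<rceil>"] allI impI)
        fix n assume "nat \<lceil>\<bar>g x\<bar>\<rceil> \<le> n"
        then have "\<lceil>\<bar>g x\<bar>\<rceil> \<le> int n" by (simp add: nat_le_iff)
        then have "\<bar>g x\<bar> \<le> real n" using ceiling_le_iff[of "\<bar>g x\<bar>" "int n"] by simp
        then show "\<bar>g x - tr n x\<bar> = 0" by (simp add: tr_def)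
      qed
    qed
    show "AE x in F. norm \<bar>g x - tr L x\<bar> \<le> \<bar>g x\<bar>" for L by (auto simp: tr_def)
    show "integrable F (\<lambda>x. \<bar>g x\<bar>)" using gi by auto
  qed (use gmF trmF in auto)
  then have "\<forall>\<^sub>F L in sequentially. (\<integral>x. \<bar>g x - tr L x\<bar> \<partial>F) < min (\<eta> / 3) (\<eta> * \<gamma> / 6)"
    using \<eta> \<gamma> by (intro order_tendstoD) auto
  then obtain L where L: "(\<integral>x. \<bar>g x - tr L x\<bar> \<partial>F) < min (\<eta> / 3) (\<eta> * \<gamma> / 6)"
    by (auto simp: eventually_sequentially)
  define h where "h = tr L"
  define e where "e x = g x - h x" for x
  define mh where "mh = (\<integral>x. h x \<partial>F)"
  have hm[measurable]: "h \<in> borel_measurable S" unfolding h_def by (rule trm)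
  have em[measurable]: "e \<in> borel_measurable S" unfolding e_def by measurable
  have hb: "\<bar>h x\<bar> \<le> real L" for x by (simp add: h_def tr_def)
  have hi: "integrable F h"
    by (rule F.integrable_const_bound[where B="real L"]) (use hb trmF in \<open>auto simp: h_def\<close>)
  have ei: "integrable F e" unfolding e_def using gi hi by auto
  have eL: "(\<integral>x. \<bar>e x\<bar> \<partial>F) < min (\<eta> / 3) (\<eta> * \<gamma> / 6)" using L by (simp add: e_def h_def)
  have mhb: "\<bar>mh\<bar> \<le> real L"
  proof -
    have "\<bar>mh\<bar> \<le> (\<integral>x. \<bar>h x\<bar> \<partial>F)" unfolding mh_def by (rule integral_abs_bound)
    also have "\<dots> \<le> (\<integral>x. real L \<partial>F)" by (intro integral_mono) (use hi hb in auto)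
    finally show ?thesis by (simp add: F.prob_space)
  qed
  have msplit: "(\<integral>x. g x \<partial>F) = (\<integral>x. e x \<partial>F) + mh"
    unfolding mh_def e_def using gi hi by simp
  have me: "\<bar>\<integral>x. e x \<partial>F\<bar> < \<eta> / 3"
    using integral_abs_bound[of F e] eL by linarith
  define c where "c i \<omega> = h (X i \<omega>) - mh" for i \<omega>
  have cm[measurable]: "c i \<in> borel_measurable M" for i unfolding c_def by measurable
  have cb: "\<bar>c i \<omega>\<bar> \<le> 2 * real L" for i \<omega> unfolding c_def using hb[of "X i \<omega>"] mhb by linarith
  have c0: "(\<integral>\<omega>. c i \<omega> \<partial>M) = 0" for i
  proof -
    have "integrable M (\<lambda>\<omega>. h (X i \<omega>))"
      by (rule M.integrable_const_bound[where B="real L"]) (use hb in auto)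
    then show ?thesis unfolding c_def using intX[OF hm, of i] by (simp add: mh_def M.prob_space)
  qed
  have cind: "M.indep_vars (\<lambda>_. borel) c UNIV"
    unfolding c_def by (rule M.indep_vars_compose2[OF ind]) measurable
  have P2: "measure M {\<omega>\<in>space M. \<eta> / 3 \<le> \<bar>(1 / real n) * (\<Sum>i\<in>{1..n}. c i \<omega>)\<bar>} \<le> 9 * (2 * real L)^2 / (\<eta>^2 * real n)"
    if n: "n \<ge> 1" for n
  proof -
    have "measure M {\<omega>\<in>space M. \<eta> / 3 \<le> \<bar>(1 / real n) * (\<Sum>i\<in>{1..n}. c i \<omega>)\<bar>}
        \<le> (\<integral>\<omega>. ((1 / real n) * (\<Sum>i\<in>{1..n}. c i \<omega>))^2 \<partial>M) / (\<eta> / 3)^2"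
    proof (rule M.second_moment_method)
      show "integrable M (\<lambda>\<omega>. ((1 / real n) * (\<Sum>i\<in>{1..n}. c i \<omega>))^2)"
      proof (rule M.integrable_const_bound[where B="(2 * real L)^2"])
        show "AE \<omega> in M. norm (((1 / real n) * (\<Sum>i\<in>{1..n}. c i \<omega>))^2) \<le> (2 * real L)^2"
        proof (intro AE_I2)
          fix \<omega>
          have "\<bar>\<Sum>i\<in>{1..n}. c i \<omega>\<bar> \<le> (\<Sum>i\<in>{1..n}. 2 * real L)"
            by (rule order_trans[OF sum_abs sum_mono]) (rule cb)
          then have "\<bar>(1 / real n) * (\<Sum>i\<in>{1..n}. c i \<omega>)\<bar> \<le> 2 * real L"
            using n by (simp add: abs_mult field_simps)
          then have "\<bar>(1 / real n) * (\<Sum>i\<in>{1..n}. c i \<omega>)\<bar>^2 \<le> (2 * real L)^2"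
            by (rule power_mono) simp
          then show "norm (((1 / real n) * (\<Sum>i\<in>{1..n}. c i \<omega>))^2) \<le> (2 * real L)^2"
            by (simp only: real_norm_def abs_power2 power2_abs)
        qed
      qed measurable
    qed (use \<eta> in auto)
    also have "(\<integral>\<omega>. ((1 / real n) * (\<Sum>i\<in>{1..n}. c i \<omega>))^2 \<partial>M) / (\<eta> / 3)^2 \<le> ((1 / real n)^2 * (real n * (2 * real L)^2)) / (\<eta> / 3)^2"
    proof (rule divide_right_mono)
      have "(\<integral>\<omega>. ((1 / real n) * (\<Sum>i\<in>{1..n}. c i \<omega>))^2 \<partial>M) = (1 / real n)^2 * (\<integral>\<omega>. (\<Sum>i\<in>{1..n}. c i \<omega>)^2 \<partial>M)"
        by (simp only: power_mult_distrib integral_mult_right_zero)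
      also have "\<dots> \<le> (1 / real n)^2 * (real n * (2 * real L)^2)"
        using var_sum_indep[OF M cind cm cb c0, of "{1..n}"] by (intro mult_left_mono) auto
      finally show "(\<integral>\<omega>. ((1 / real n) * (\<Sum>i\<in>{1..n}. c i \<omega>))^2 \<partial>M) \<le> (1 / real n)^2 * (real n * (2 * real L)^2)" .
    qed simp
    finally show ?thesis using n by (simp add: field_simps power2_eq_square)
  qed
  have P1: "measure M {\<omega>\<in>space M. \<eta> / 3 \<le> (1 / real n) * (\<Sum>i\<in>{1..n}. \<bar>e (X i \<omega>)\<bar>)} < \<gamma> / 2"
    if n: "n \<ge> 1" for n
  proof -
    have ie: "integrable M (\<lambda>\<omega>. \<bar>e (X i \<omega>)\<bar>)" for i
    proof -
      have "integrable (distr M S (X i)) (\<lambda>x. \<bar>e x\<bar>)" using ei Xd[of i] by auto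
      then show ?thesis by (subst (asm) integrable_distr_eq) auto
    qed
    have "measure M {\<omega>\<in>space M. \<eta> / 3 \<le> (1 / real n) * (\<Sum>i\<in>{1..n}. \<bar>e (X i \<omega>)\<bar>)}
        \<le> (\<integral>\<omega>. (1 / real n) * (\<Sum>i\<in>{1..n}. \<bar>e (X i \<omega>)\<bar>) \<partial>M) / (\<eta> / 3)"
      by (rule integral_Markov_inequality_measure[where A="space M"]) (use \<eta> ie in auto)
    also have "(\<integral>\<omega>. (1 / real n) * (\<Sum>i\<in>{1..n}. \<bar>e (X i \<omega>)\<bar>) \<partial>M) = (\<integral>x. \<bar>e x\<bar> \<partial>F)"
    proof -
      have "(\<integral>\<omega>. (1 / real n) * (\<Sum>i\<in>{1..n}. \<bar>e (X i \<omega>)\<bar>) \<partial>M) = (1 / real n) * (\<Sum>i\<in>{1..n}. \<integral>\<omega>. \<bar>e (X i \<omega>)\<bar> \<partial>M)"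
        by (simp add: integral_sum ie)
      also have "\<dots> = (1 / real n) * (\<Sum>i\<in>{1..n}. \<integral>x. \<bar>e x\<bar> \<partial>F)"
      proof -
        have "(\<lambda>x. \<bar>e x\<bar>) \<in> borel_measurable S" by measurable
        from intX[OF this] show ?thesis by simp
      qed
      finally show ?thesis using n by simp
    qed
    also have "(\<integral>x. \<bar>e x\<bar> \<partial>F) / (\<eta> / 3) < (\<eta> * \<gamma> / 6) / (\<eta> / 3)"
      using eL \<eta> by (intro divide_strict_right_mono) auto
    also have "(\<eta> * \<gamma> / 6) / (\<eta> / 3) = \<gamma> / 2" using \<eta> by (simp add: field_simps)
    finally show ?thesis .
  qed
  have ev2: "\<forall>\<^sub>F n in sequentially. 9 * (2 * real L)^2 / (\<eta>^2 * real n) \<le> \<gamma> / 2"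
  proof -
    have "(\<lambda>n. (9 * (2 * real L)^2 / \<eta>^2) / real n) \<longlonglongrightarrow> 0"
      by (rule lim_const_over_n)
    moreover have "(\<lambda>n. (9 * (2 * real L)^2 / \<eta>^2) / real n) = (\<lambda>n. 9 * (2 * real L)^2 / (\<eta>^2 * real n))"
      by (simp add: field_simps)
    ultimately have "(\<lambda>n. 9 * (2 * real L)^2 / (\<eta>^2 * real n)) \<longlonglongrightarrow> 0" by simp
    moreover have "0 < \<gamma> / 2" using \<gamma> by simp
    ultimately have "\<forall>\<^sub>F n in sequentially. 9 * (2 * real L)^2 / (\<eta>^2 * real n) < \<gamma> / 2"
      by (rule order_tendstoD(2))
    then show ?thesis by (rule eventually_mono) simp
  qed
  show ?thesis
    using ev2 eventually_ge_at_top[of 1]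
  proof eventually_elim
    case (elim n)
    let ?A = "{\<omega>\<in>space M. \<eta> \<le> \<bar>(1 / real n) * (\<Sum>i\<in>{1..n}. g (X i \<omega>)) - (\<integral>x. g x \<partial>F)\<bar>}"
    let ?A1 = "{\<omega>\<in>space M. \<eta> / 3 \<le> (1 / real n) * (\<Sum>i\<in>{1..n}. \<bar>e (X i \<omega>)\<bar>)}"
    let ?A2 = "{\<omega>\<in>space M. \<eta> / 3 \<le> \<bar>(1 / real n) * (\<Sum>i\<in>{1..n}. c i \<omega>)\<bar>}"
    have sub: "?A \<subseteq> ?A1 \<union> ?A2"
    proof
      fix \<omega> assume "\<omega> \<in> ?A"
      then have \<omega>: "\<omega> \<in> space M" and big: "\<eta> \<le> \<bar>(1 / real n) * (\<Sum>i\<in>{1..n}. g (X i \<omega>)) - (\<integral>x. g x \<partial>F)\<bar>" by auto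
      have dec: "(1 / real n) * (\<Sum>i\<in>{1..n}. g (X i \<omega>)) - (\<integral>x. g x \<partial>F)
          = (1 / real n) * (\<Sum>i\<in>{1..n}. e (X i \<omega>)) - (\<integral>x. e x \<partial>F) + (1 / real n) * (\<Sum>i\<in>{1..n}. c i \<omega>)"
        using elim(2) by (simp add: msplit c_def e_def sum_subtractf sum.distrib algebra_simps)
      have "\<bar>(1 / real n) * (\<Sum>i\<in>{1..n}. e (X i \<omega>))\<bar> \<le> (1 / real n) * (\<Sum>i\<in>{1..n}. \<bar>e (X i \<omega>)\<bar>)"
        by (simp add: abs_mult divide_right_mono sum_abs)
      moreover have arith: "\<eta> / 3 \<le> s' \<or> \<eta> / 3 \<le> \<bar>cc\<bar>"
        if "\<eta> \<le> \<bar>a - b + cc\<bar>" "\<bar>a\<bar> \<le> s'" "\<bar>b\<bar> < \<eta> / 3" for a b cc s' :: real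
        using that by linarith
      ultimately show "\<omega> \<in> ?A1 \<union> ?A2" using big me \<omega> unfolding dec
        by (metis (no_types, lifting) Un_iff mem_Collect_eq)
    qed
    have "measure M ?A \<le> measure M (?A1 \<union> ?A2)"
      using sub by (intro M.finite_measure_mono) auto
    also have "\<dots> \<le> measure M ?A1 + measure M ?A2"
      by (intro measure_Un_le) auto
    also have "\<dots> \<le> \<gamma> / 2 + \<gamma> / 2"
      using P1[OF elim(2)] P2[OF elim(2)] elim(1) by linarith
    finally show ?case by simp
  qed
qed

lemma sum_UNIV_Plus: "(\<Sum>k\<in>(UNIV :: ('a::finite + 'b::finite) set). f k) = (\<Sum>a\<in>UNIV. f (Inl a)) + (\<Sum>b\<in>UNIV. f (Inr b))"
  using sum.Plus[of "UNIV :: 'a set" "UNIV :: 'b set" f] by (simp add: comp_def)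

lemma A_mat_stack: "A_mat B *v stack a b = B *v a + b"
  by (simp add: vec_eq_iff A_mat_def stack_def matrix_vector_mult_def sum_UNIV_Plus
      if_distrib[of "\<lambda>x. x * _"] sum.delta cong: if_cong)

lemma norm_stack_ge: "norm (a::real^'a::finite) \<le> norm (stack a (b::real^'b::finite))"
proof -
  have "norm a ^ 2 \<le> norm (stack a b) ^ 2"
    unfolding power2_norm_eq_inner
    by (simp add: inner_vec_def stack_def sum_UNIV_Plus sum_nonneg)
  then show ?thesis by (simp add: power2_le_iff_abs_le)
qed

lemma norm_mv: "norm (M *v x) \<le> norm M * norm (x::real^'n)"
  for M :: "real^'n^'m"
proof -
  have row: "(M *v x) $ i = M $ i \<bullet> x" for i
    by (simp add: matrix_vector_mult_def inner_vec_def mult.commute)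
  have "norm (M *v x) ^ 2 = (\<Sum>i\<in>UNIV. (M $ i \<bullet> x)^2)"
    unfolding power2_norm_eq_inner by (simp add: inner_vec_def row power2_eq_square)
  also have "\<dots> \<le> (\<Sum>i\<in>UNIV. (norm (M $ i) * norm x)^2)"
  proof (rule sum_mono)
    fix i show "(M $ i \<bullet> x)^2 \<le> (norm (M $ i) * norm x)^2"
      using Cauchy_Schwarz_ineq2[of "M $ i" x] by (simp add: power2_le_iff_abs_le)
  qed
  also have "\<dots> = (norm M * norm x)^2"
  proof -
    have "norm M ^ 2 = (\<Sum>i\<in>UNIV. norm (M $ i) ^ 2)"
      by (simp only: power2_norm_eq_inner inner_vec_def)
    then show ?thesis by (simp add: power_mult_distrib sum_distrib_right)
  qed
  finally show ?thesis by (simp add: power2_le_iff_abs_le)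
qed

lemma linear_kron_vec_I: "bounded_linear (kron_vec_I :: real^'p \<Rightarrow> _)"
  unfolding linear_conv_bounded_linear[symmetric]
  by (rule linearI) (simp_all add: kron_vec_I_def vec_eq_iff algebra_simps)

lemma linear_kron_I_vec: "bounded_linear (kron_I_vec :: real^'p \<Rightarrow> _)"
  unfolding linear_conv_bounded_linear[symmetric]
  by (rule linearI) (simp_all add: kron_I_vec_def vec_eq_iff algebra_simps)

lemma linear_vecm: "bounded_linear (vecm :: real^'n^'m \<Rightarrow> _)"
  unfolding linear_conv_bounded_linear[symmetric]
  by (rule linearI) (simp_all add: vecm_def vec_eq_iff)

lemma linear_stack: "bounded_linear (\<lambda>p :: (real^'a) \<times> (real^'b). stack (fst p) (snd p))"
  unfolding linear_conv_bounded_linear[symmetric]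
  by (rule linearI) (simp_all add: stack_def vec_eq_iff split: sum.splits)

lemma cont_outer_sq: "continuous_on UNIV (\<lambda>v::real^'n. outer v v)"
  unfolding outer_def by (intro continuous_intros)

lemma cont_colrow: "continuous_on UNIV (\<lambda>y::real^'n. colrow (kron_vec y y) y)"
  unfolding colrow_def kron_vec_def by (intro continuous_intros)

lemma meas_sign_outer[measurable]: "(sign_outer :: real^'n \<Rightarrow> _) \<in> borel_measurable borel"
proof -
  have "(\<lambda>x::real^'n. outer (sgn x) (sgn x)) \<in> borel_measurable borel"
    using borel_measurable_continuous_onI[OF cont_outer_sq] borel_measurable_sgn
    by (rule measurable_compose[rotated])
  then show ?thesis unfolding sign_outer_def[abs_def] .
qed

lemma meas_colrow[measurable]: "(\<lambda>y::real^'n. colrow (kron_vec y y) y) \<in> borel_measurable borel"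
  by (rule borel_measurable_continuous_onI[OF cont_colrow])

lemma meas_kron_vec_I[measurable]: "(kron_vec_I :: real^'p \<Rightarrow> _) \<in> borel_measurable borel"
  by (rule borel_measurable_continuous_onI linear_continuous_on linear_kron_vec_I)+

lemma meas_kron_I_vec[measurable]: "(kron_I_vec :: real^'p \<Rightarrow> _) \<in> borel_measurable borel"
  by (rule borel_measurable_continuous_onI linear_continuous_on linear_kron_I_vec)+

lemma meas_vecm[measurable]: "(vecm :: real^'n^'m \<Rightarrow> _) \<in> borel_measurable borel"
  by (rule borel_measurable_continuous_onI linear_continuous_on linear_vecm)+

lemma meas_stack[measurable]: "(\<lambda>p :: (real^'a) \<times> (real^'b). stack (fst p) (snd p)) \<in> borel_measurable borel"
  by (rule borel_measurable_continuous_onI linear_continuous_on linear_stack)+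

lemma meas_Dmat[measurable]: "(Dmat :: real^'p \<Rightarrow> _) \<in> borel_measurable borel"
  unfolding Dmat_def[abs_def] by measurable

lemma wlln_eucl:
  fixes X :: "nat \<Rightarrow> 'a \<Rightarrow> 'b" and g :: "'b \<Rightarrow> 'c::euclidean_space"
  assumes M: "prob_space M" and Xm: "\<And>i. X i \<in> measurable M S" and Xd: "\<And>i. distr M S (X i) = F"
    and ind: "prob_space.indep_vars M (\<lambda>_. S) X UNIV"
    and gm: "g \<in> borel_measurable S" and gi: "integrable F g"
    and \<eta>: "\<eta> > 0" and \<gamma>: "\<gamma> > 0"
  shows "\<forall>\<^sub>F n in sequentially. measure M {\<omega>\<in>space M. \<eta> \<le> norm ((1 / real n) *\<^sub>R (\<Sum>i\<in>{1..n}. g (X i \<omega>)) - (\<integral>x. g x \<partial>F))} \<le> \<gamma>"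
proof -
  interpret M: prob_space M by (rule M)
  note Xm[measurable] gm[measurable]
  define K where "K = real (card (Basis :: 'c set))"
  have K: "K > 0" unfolding K_def by (simp add: card_gt_0_iff)
  define Sb where "Sb n b = {\<omega>\<in>space M. \<eta> / K \<le> \<bar>(1 / real n) * (\<Sum>i\<in>{1..n}. g (X i \<omega>) \<bullet> b) - (\<integral>x. g x \<bullet> b \<partial>F)\<bar>}" for n b
  have "\<forall>b\<in>Basis. \<forall>\<^sub>F n in sequentially. measure M (Sb n b) \<le> \<gamma> / K"
  proof
    fix b :: 'c assume b: "b \<in> Basis"
    have "(\<lambda>x. g x \<bullet> b) \<in> borel_measurable S" by measurable
    moreover have "integrable F (\<lambda>x. g x \<bullet> b)" using gi by auto
    ultimately show "\<forall>\<^sub>F n in sequentially. measure M (Sb n b) \<le> \<gamma> / K"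
      unfolding Sb_def using wlln_real[OF M Xm Xd ind _ _ divide_pos_pos[OF \<eta> K] divide_pos_pos[OF \<gamma> K]] by blast
  qed
  then have "\<forall>\<^sub>F n in sequentially. \<forall>b\<in>Basis. measure M (Sb n b) \<le> \<gamma> / K"
    by (intro eventually_ball_finite) auto
  then show ?thesis
  proof (rule eventually_mono)
    fix n assume n: "\<forall>b\<in>Basis. measure M (Sb n b) \<le> \<gamma> / K"
    let ?v = "\<lambda>\<omega>. (1 / real n) *\<^sub>R (\<Sum>i\<in>{1..n}. g (X i \<omega>)) - (\<integral>x. g x \<partial>F)"
    have vb: "?v \<omega> \<bullet> b = (1 / real n) * (\<Sum>i\<in>{1..n}. g (X i \<omega>) \<bullet> b) - (\<integral>x. g x \<bullet> b \<partial>F)" for \<omega> b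
      using gi by (simp add: inner_diff_left inner_sum_left)
    have sub: "{\<omega>\<in>space M. \<eta> \<le> norm (?v \<omega>)} \<subseteq> (\<Union>b\<in>Basis. Sb n b)"
    proof
      fix \<omega> assume "\<omega> \<in> {\<omega>\<in>space M. \<eta> \<le> norm (?v \<omega>)}"
      then have \<omega>: "\<omega> \<in> space M" and big: "\<eta> \<le> norm (?v \<omega>)" by auto
      show "\<omega> \<in> (\<Union>b\<in>Basis. Sb n b)"
      proof (rule ccontr)
        assume "\<omega> \<notin> (\<Union>b\<in>Basis. Sb n b)"
        then have small: "\<bar>?v \<omega> \<bullet> b\<bar> < \<eta> / K" if "b \<in> Basis" for b
          using that \<omega> unfolding vb by (auto simp: Sb_def not_le)
        have "norm (?v \<omega>) \<le> (\<Sum>b\<in>Basis. \<bar>?v \<omega> \<bullet> b\<bar>)" by (rule norm_le_l1)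
        also have "\<dots> < (\<Sum>b\<in>(Basis::'c set). \<eta> / K)"
        proof (rule sum_strict_mono)
          fix b :: 'c assume "b \<in> Basis" then show "\<bar>?v \<omega> \<bullet> b\<bar> < \<eta> / K" by (rule small)
        qed auto
        also have "\<dots> = \<eta>" using K by (simp add: K_def)
        finally show False using big by simp
      qed
    qed
    have Sbm: "Sb n b \<in> sets M" for b unfolding Sb_def by measurable
    have "measure M {\<omega>\<in>space M. \<eta> \<le> norm (?v \<omega>)} \<le> measure M (\<Union>b\<in>Basis. Sb n b)"
      using sub Sbm by (intro M.finite_measure_mono) auto
    also have "\<dots> \<le> (\<Sum>b\<in>Basis. measure M (Sb n b))"
      using Sbm by (intro M.finite_measure_subadditive_finite) auto
    also have "\<dots> \<le> (\<Sum>b\<in>(Basis::'c set). \<gamma> / K)"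
      using n by (intro sum_mono) auto
    also have "\<dots> = \<gamma>" using K by (simp add: K_def)
    finally show "measure M {\<omega>\<in>space M. \<eta> \<le> norm (?v \<omega>)} \<le> \<gamma>" .
  qed
qed

lemma norm_colrow: "norm (colrow a b) = norm a * norm (b::real^'n)" for a :: "real^'m"
proof -
  have row: "colrow a b $ i = a $ i *\<^sub>R b" for i by (simp add: colrow_def vec_eq_iff)
  have "norm (colrow a b)^2 = (norm a * norm b)^2"
    unfolding power2_norm_eq_inner power_mult_distrib
    apply (simp add: inner_vec_def row sum_distrib_right sum_distrib_left power2_eq_square mult.commute mult.left_commute)
    by (rule sum.swap)
  then show ?thesis by (simp add: power2_eq_iff_nonneg)
qed

lemma norm_kron_vec: "norm (kron_vec a b) = norm a * norm (b::real^'r)" for a :: "real^'m"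
proof -
  have "norm (kron_vec a b)^2 = (norm a * norm b)^2"
    unfolding power2_norm_eq_inner power_mult_distrib
    by (simp add: inner_vec_def kron_vec_def sum_distrib_right sum_distrib_left power2_eq_square mult_ac)
      (simp add: sum.cartesian_product case_prod_beta)
  then show ?thesis by (simp add: power2_eq_iff_nonneg)
qed

lemma int_facts:
  fixes F :: "(real^'p) measure" and t :: "real^'p"
  assumes Fp: "prob_space F" and Fs: "sets F = sets borel"
    and II: "(\<integral>\<^sup>+x. (if x = t then \<infinity> else ennreal (norm (x - t) powr (-3/2))) \<partial>F) < \<infinity>"
  shows "integrable F (\<lambda>x. norm (x - t) powr (-3/2))"
    and "integrable F (\<lambda>x. 1 / norm (x - t))"
    and "AE x in F. x \<noteq> t"
    and "integrable F (\<lambda>x. Dmat (x - t))"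
    and "B_mat F t = (\<integral>x. Dmat (x - t) \<partial>F)"
proof -
  interpret F: prob_space F by (rule Fp)
  have bF: "measurable F N = measurable borel N" for N :: "'z measure" by (rule measurable_cong_sets[OF Fs refl])
  have hm: "(\<lambda>x. if x = t then \<infinity> else ennreal (norm (x - t) powr (-3/2))) \<in> borel_measurable F"
    unfolding bF by measurable
  show h: "integrable F (\<lambda>x. norm (x - t) powr (-3/2))"
  proof (rule integrableI_bounded)
    show "(\<lambda>x. norm (x - t) powr (-3/2)) \<in> borel_measurable F" unfolding bF by measurable
    have "(\<integral>\<^sup>+x. ennreal (norm (norm (x - t) powr (-3/2))) \<partial>F) \<le> (\<integral>\<^sup>+x. (if x = t then \<infinity> else ennreal (norm (x - t) powr (-3/2))) \<partial>F)"
      by (intro nn_integral_mono) auto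
    then show "(\<integral>\<^sup>+x. ennreal (norm (norm (x - t) powr (-3/2))) \<partial>F) < \<infinity>" using II by (rule le_less_trans)
  qed
  show "AE x in F. x \<noteq> t"
  proof -
    have "AE x in F. (if x = t then \<infinity> else ennreal (norm (x - t) powr (-3/2))) \<noteq> \<infinity>"
      using II by (intro nn_integral_PInf_AE hm) auto
    then show ?thesis by (rule AE_mp) (auto intro: AE_I2)
  qed
  have bnd: "1 / r \<le> 1 + r powr (-3/2)" if "r \<ge> 0" for r :: real
  proof (cases "r < 1")
    case True
    show ?thesis
    proof (cases "r = 0")
      case False
      then have r: "r > 0" using that by simp
      have "r powr (-1) \<le> r powr (-3/2)" using r True by (intro powr_mono') auto
      then show ?thesis using r by (simp add: powr_neg_one)
    qed simp
  next
    case False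
    then have "1 / r \<le> 1" by simp
    then show ?thesis by (smt (verit) powr_ge_zero)
  qed
  show inv: "integrable F (\<lambda>x. 1 / norm (x - t))"
  proof (rule Bochner_Integration.integrable_bound)
    show "integrable F (\<lambda>x. 1 + norm (x - t) powr (-3/2))" using h by simp
    show "(\<lambda>x. 1 / norm (x - t)) \<in> borel_measurable F" unfolding bF by measurable
    show "AE x in F. norm (1 / norm (x - t)) \<le> norm (1 + norm (x - t) powr (-3/2))"
      using bnd by (intro AE_I2) (simp add: abs_of_nonneg add_nonneg_nonneg)
  qed
  define P where "P y = (1 / norm y ^ 4) *\<^sub>R colrow (kron_vec y y) y" for y :: "real^'p"
  define v where "v y = (1 / norm y ^ 2) *\<^sub>R y" for y :: "real^'p"
  have nP: "norm (P y) = 1 / norm y" for y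
  proof (cases "y = 0")
    case False
    have "norm (P y) = norm y ^ 3 / norm y ^ 4"
      by (simp add: P_def norm_colrow norm_kron_vec power3_eq_cube)
    also have "\<dots> = 1 / norm y" using False by (simp add: power_eq_if field_simps)
    finally show ?thesis .
  qed (simp add: P_def)
  have nv: "norm (v y) = 1 / norm y" for y
    by (cases "y = 0") (simp_all add: v_def power2_eq_square)
  have Pm: "(\<lambda>x. P (x - t)) \<in> borel_measurable F" unfolding bF P_def by measurable
  have vm: "(\<lambda>x. v (x - t)) \<in> borel_measurable F" unfolding bF v_def by measurable
  have Pi: "integrable F (\<lambda>x. P (x - t))"
    by (rule Bochner_Integration.integrable_bound[OF inv Pm]) (simp add: nP)
  have vi: "integrable F (\<lambda>x. v (x - t))"
    by (rule Bochner_Integration.integrable_bound[OF inv vm]) (simp add: nv)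
  have D: "Dmat y = 2 *\<^sub>R P y - kron_vec_I (v y) - kron_I_vec (v y)" for y
    by (simp add: Dmat_def P_def v_def)
  have i1: "integrable F (\<lambda>x. kron_vec_I (v (x - t)))" by (rule Bochner_Integration.integrable_bounded_linear[OF linear_kron_vec_I vi])
  have i2: "integrable F (\<lambda>x. kron_I_vec (v (x - t)))" by (rule Bochner_Integration.integrable_bounded_linear[OF linear_kron_I_vec vi])
  show "integrable F (\<lambda>x. Dmat (x - t))" unfolding D using Pi i1 i2 by auto
  have "(\<integral>x. Dmat (x - t) \<partial>F) = 2 *\<^sub>R (\<integral>x. P (x - t) \<partial>F) - kron_vec_I (\<integral>x. v (x - t) \<partial>F) - kron_I_vec (\<integral>x. v (x - t) \<partial>F)"
    unfolding D using Pi i1 i2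
    by (simp add: integral_bounded_linear[OF linear_kron_vec_I vi, symmetric]
        integral_bounded_linear[OF linear_kron_I_vec vi, symmetric])
  then show "B_mat F t = (\<integral>x. Dmat (x - t) \<partial>F)"
    by (simp add: B_mat_def P_def v_def)
qed

definition rho :: "real^'p \<Rightarrow> real^'p \<Rightarrow> real^'p^'p" where
  "rho y d = sign_outer (y - d) - sign_outer y - Dm y d"

lemma mv_scaleR_right: "M *v (c *\<^sub>R x) = c *\<^sub>R (M *v x)" for M :: "real^'n^'m"
  by (simp add: vec_eq_iff matrix_vector_mult_def sum_distrib_left algebra_simps)

lemma mv_scaleR_left: "(c *\<^sub>R M) *v x = c *\<^sub>R (M *v x)" for M :: "real^'n^'m"
  by (simp add: vec_eq_iff matrix_vector_mult_def sum_distrib_left algebra_simps)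

lemma mv_diff_left: "(M - N) *v x = M *v x - N *v x" for M :: "real^'n^'m"
  by (simp add: vec_eq_iff matrix_vector_mult_def sum_subtractf algebra_simps)

lemma mv_sum_left: "(\<Sum>i\<in>I. f i) *v x = (\<Sum>i\<in>I. f i *v x)" for f :: "'i \<Rightarrow> real^'n^'m"
  unfolding vec_eq_iff matrix_vector_mult_def
  by (simp add: sum_component sum_distrib_right, intro allI sum.swap)

lemma vecm_sum: "vecm (\<Sum>i\<in>I. f i) = (\<Sum>i\<in>I. vecm (f i))"
  by (simp add: vec_eq_iff vecm_def sum_component)

lemma R_ident:
  fixes X :: "nat \<Rightarrow> 'a \<Rightarrow> real^'p" and Tn :: "'a \<Rightarrow> real^'p"
  assumes n: "n \<ge> 1"
  shows "sqrt (real n) *\<^sub>R vecm (S_emp X n Tn \<omega> - S0) - A_mat B *v (sqrt (real n) *\<^sub>R stack (Tn \<omega> - t) (vecm (S_emp X n (\<lambda>_. t) \<omega> - S0)))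
    = sqrt (real n) *\<^sub>R vecm ((1 / real n) *\<^sub>R (\<Sum>i\<in>{1..n}. rho (X i \<omega> - t) (Tn \<omega> - t)))
      + sqrt (real n) *\<^sub>R (((1 / real n) *\<^sub>R (\<Sum>i\<in>{1..n}. Dmat (X i \<omega> - t)) - B) *v (Tn \<omega> - t))"
proof -
  define d where "d = Tn \<omega> - t"
  have e1: "X i \<omega> - Tn \<omega> = (X i \<omega> - t) - d" for i by (simp add: d_def)
  have diff: "S_emp X n Tn \<omega> - S_emp X n (\<lambda>_. t) \<omega>
      = (1 / real n) *\<^sub>R (\<Sum>i\<in>{1..n}. rho (X i \<omega> - t) d) + (1 / real n) *\<^sub>R (\<Sum>i\<in>{1..n}. Dm (X i \<omega> - t) d)"
    by (simp add: S_emp_def e1 rho_def sum.distrib[symmetric] scaleR_diff_right[symmetric]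
        scaleR_add_right[symmetric] sum_subtractf[symmetric])
  have dm: "vecm ((1 / real n) *\<^sub>R (\<Sum>i\<in>{1..n}. Dm (X i \<omega> - t) d)) = ((1 / real n) *\<^sub>R (\<Sum>i\<in>{1..n}. Dmat (X i \<omega> - t))) *v d"
    by (simp add: vecm_linear vecm_sum mv_scaleR_left mv_sum_left Dmat_mult)
  have "sqrt (real n) *\<^sub>R vecm (S_emp X n Tn \<omega> - S0) - A_mat B *v (sqrt (real n) *\<^sub>R stack d (vecm (S_emp X n (\<lambda>_. t) \<omega> - S0)))
      = sqrt (real n) *\<^sub>R (vecm (S_emp X n Tn \<omega> - S_emp X n (\<lambda>_. t) \<omega>) - B *v d)"
    by (simp add: mv_scaleR_right A_mat_stack vecm_linear algebra_simps)
  also have "\<dots> = sqrt (real n) *\<^sub>R vecm ((1 / real n) *\<^sub>R (\<Sum>i\<in>{1..n}. rho (X i \<omega> - t) d))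
      + sqrt (real n) *\<^sub>R (((1 / real n) *\<^sub>R (\<Sum>i\<in>{1..n}. Dmat (X i \<omega> - t)) - B) *v d)"
    unfolding diff vecm_linear(2) dm mv_diff_left by (simp add: algebra_simps)
  finally show ?thesis by (simp add: d_def)
qed

lemma pw_term:
  fixes a b r c :: real
  assumes "r > 0" "0 \<le> a" "a \<le> b" "0 \<le> c"
  shows "(a / r) powr c \<le> b powr c * r powr (-c)"
proof -
  have "(a / r) powr c = a powr c / r powr c" using assms by (simp add: powr_divide)
  also have "\<dots> \<le> b powr c / r powr c"
    using assms by (intro divide_right_mono powr_mono2) auto
  also have "\<dots> = b powr c * r powr (-c)" by (simp add: powr_minus_divide)
  finally show ?thesis .
qed

lemma R_bound:
  fixes X :: "nat \<Rightarrow> 'a \<Rightarrow> real^'p" and Tn :: "'a \<Rightarrow> real^'p"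
  assumes n: "n \<ge> 1" and nz: "\<forall>i\<in>{1..n}. X i \<omega> \<noteq> t"
    and U: "sqrt (real n) * norm (Tn \<omega> - t) \<le> K1"
    and V: "(1 / real n) * (\<Sum>i\<in>{1..n}. norm (X i \<omega> - t) powr (-3/2)) \<le> K2"
    and W: "norm ((1 / real n) *\<^sub>R (\<Sum>i\<in>{1..n}. Dmat (X i \<omega> - t)) - B) \<le> \<eta>"
    and K1: "K1 \<ge> 0"
  shows "norm (sqrt (real n) *\<^sub>R vecm ((1 / real n) *\<^sub>R (\<Sum>i\<in>{1..n}. rho (X i \<omega> - t) (Tn \<omega> - t)))
      + sqrt (real n) *\<^sub>R (((1 / real n) *\<^sub>R (\<Sum>i\<in>{1..n}. Dmat (X i \<omega> - t)) - B) *v (Tn \<omega> - t)))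
    \<le> 16 * (K1 / sqrt (real n)) powr (3/2) * sqrt (real n) * K2 + \<eta> * K1"
proof -
  define d where "d = Tn \<omega> - t"
  define q where "q = (K1 / sqrt (real n)) powr (3/2)"
  have sn: "sqrt (real n) > 0" using n by simp
  have dle: "norm d \<le> K1 / sqrt (real n)" using U sn by (simp add: d_def field_simps)
  have q0: "q \<ge> 0" by (simp add: q_def)
  have rho_le: "norm (rho (X i \<omega> - t) d) \<le> 16 * q * norm (X i \<omega> - t) powr (-3/2)" if i: "i \<in> {1..n}" for i
  proof -
    have y: "X i \<omega> - t \<noteq> 0" using nz i by auto
    have "norm (rho (X i \<omega> - t) d) \<le> 16 * (norm d / norm (X i \<omega> - t)) powr (3/2)"
      unfolding rho_def by (rule rem_bound[OF y])
    also have "\<dots> \<le> 16 * (q * norm (X i \<omega> - t) powr (-(3/2)))"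
      unfolding q_def using y dle by (intro mult_left_mono pw_term) auto
    finally show ?thesis by simp
  qed
  have t1: "norm (sqrt (real n) *\<^sub>R vecm ((1 / real n) *\<^sub>R (\<Sum>i\<in>{1..n}. rho (X i \<omega> - t) d)))
      \<le> 16 * q * sqrt (real n) * K2"
  proof -
    have "norm (sqrt (real n) *\<^sub>R vecm ((1 / real n) *\<^sub>R (\<Sum>i\<in>{1..n}. rho (X i \<omega> - t) d)))
        = sqrt (real n) * ((1 / real n) * norm (\<Sum>i\<in>{1..n}. rho (X i \<omega> - t) d))"
      by (simp add: norm_vecm)
    also have "\<dots> \<le> sqrt (real n) * ((1 / real n) * (\<Sum>i\<in>{1..n}. 16 * q * norm (X i \<omega> - t) powr (-3/2)))"
      using rho_le by (intro mult_left_mono order_trans[OF norm_sum sum_mono]) auto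
    also have "\<dots> = 16 * q * sqrt (real n) * ((1 / real n) * (\<Sum>i\<in>{1..n}. norm (X i \<omega> - t) powr (-3/2)))"
      by (simp add: sum_distrib_left[symmetric] mult_ac)
    also have "\<dots> \<le> 16 * q * sqrt (real n) * K2"
      using V q0 by (intro mult_left_mono) auto
    finally show ?thesis .
  qed
  have t2: "norm (sqrt (real n) *\<^sub>R (((1 / real n) *\<^sub>R (\<Sum>i\<in>{1..n}. Dmat (X i \<omega> - t)) - B) *v d)) \<le> \<eta> * K1"
  proof -
    have "norm (sqrt (real n) *\<^sub>R (((1 / real n) *\<^sub>R (\<Sum>i\<in>{1..n}. Dmat (X i \<omega> - t)) - B) *v d))
        \<le> sqrt (real n) * (norm ((1 / real n) *\<^sub>R (\<Sum>i\<in>{1..n}. Dmat (X i \<omega> - t)) - B) * norm d)"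
      by (simp del: One_nat_def) (intro mult_left_mono norm_mv, simp)
    also have "\<dots> = norm ((1 / real n) *\<^sub>R (\<Sum>i\<in>{1..n}. Dmat (X i \<omega> - t)) - B) * (sqrt (real n) * norm d)"
      by simp
    also have "\<dots> \<le> \<eta> * K1"
      using W U order_trans[OF norm_ge_zero W] by (intro mult_mono) (auto simp: d_def)
    finally show ?thesis .
  qed
  show ?thesis
    using norm_triangle_le[OF add_mono[OF t1 t2]] by (simp add: d_def q_def)
qed

lemma meas_stack2[measurable]:
  fixes f :: "'a \<Rightarrow> real^'b" and g :: "'a \<Rightarrow> real^'c"
  assumes [measurable]: "f \<in> borel_measurable M" "g \<in> borel_measurable M"
  shows "(\<lambda>\<omega>. stack (f \<omega>) (g \<omega>)) \<in> borel_measurable M"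
proof -
  have "(\<lambda>\<omega>. (\<lambda>p :: (real^'b) \<times> (real^'c). stack (fst p) (snd p)) (f \<omega>, g \<omega>)) \<in> borel_measurable M"
    by (rule measurable_compose[OF borel_measurable_Pair[OF assms] meas_stack])
  then show ?thesis by simp
qed

lemma tau_eq:
  assumes "n > 0" "K1 \<ge> 0"
  shows "(K1 / sqrt (real n)) powr (3/2) * sqrt (real n) = K1 powr (3/2) * real n powr (-1/4)"
proof -
  have s: "sqrt (real n) = real n powr (1/2)" using assms by (simp add: powr_half_sqrt)
  have "(K1 / sqrt (real n)) powr (3/2) = K1 powr (3/2) / (real n powr (1/2)) powr (3/2)"
    using assms by (simp add: powr_divide s)
  also have "(real n powr (1/2)) powr (3/2) = real n powr (3/4)" by (simp add: powr_powr)
  finally have "(K1 / sqrt (real n)) powr (3/2) * sqrt (real n) = K1 powr (3/2) * (real n powr (1/2) / real n powr (3/4))"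
    by (simp add: s)
  also have "real n powr (1/2) / real n powr (3/4) = real n powr (-1/4)"
    using assms by (simp add: powr_diff[symmetric])
  finally show ?thesis .
qed

lemma tau_lim:
  assumes "K1 \<ge> 0" "c > 0"
  shows "\<forall>\<^sub>F n in sequentially. 16 * (K1 / sqrt (real n)) powr (3/2) * sqrt (real n) * K2 < c"
proof -
  have "((\<lambda>n. real n powr (-1/4)) \<longlongrightarrow> 0) sequentially"
    by (rule tendsto_neg_powr) (auto intro: filterlim_real_sequentially)
  then have "((\<lambda>n. 16 * K1 powr (3/2) * K2 * real n powr (-1/4)) \<longlongrightarrow> 0) sequentially"
    by (rule tendsto_mult_right_zero)
  then have "\<forall>\<^sub>F n in sequentially. 16 * K1 powr (3/2) * K2 * real n powr (-1/4) < c"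
    using assms(2) by (rule order_tendstoD)
  then show ?thesis using eventually_gt_at_top[of 0]
  proof eventually_elim
    case (elim n)
    have "16 * (K1 / sqrt (real n)) powr (3/2) * sqrt (real n) * K2 = 16 * K1 powr (3/2) * K2 * real n powr (-1/4)"
    proof -
      have "16 * (K1 / sqrt (real n)) powr (3/2) * sqrt (real n) * K2 = 16 * ((K1 / sqrt (real n)) powr (3/2) * sqrt (real n)) * K2"
        by (simp only: mult.assoc)
      also have "\<dots> = 16 * (K1 powr (3/2) * real n powr (-1/4)) * K2" unfolding tau_eq[OF elim(2) assms(1)] ..
      finally show ?thesis by (simp only: mult_ac)
    qed
    then show ?case using elim(1) by linarith
  qed
qed

lemma meas_mv[measurable]: "((*v) (A :: real^'n^'m)) \<in> borel_measurable borel"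
  by (rule borel_measurable_continuous_onI linear_continuous_on matrix_vector_mul_bounded_linear)+

theorem theorem3:
  fixes M :: "'a measure" and F :: "(real^'p) measure"
    and X :: "nat \<Rightarrow> 'a \<Rightarrow> real^'p" and T :: "nat \<Rightarrow> 'a \<Rightarrow> real^'p"
    and t :: "real^'p" and \<Xi> :: "real^('p + ('p \<times> 'p))^('p + ('p \<times> 'p))"
  assumes p2: "CARD('p) \<ge> 2"
    and M: "prob_space M"
    and F: "prob_space F" "sets F = sets borel"
    and Xmeas: "\<And>i. X i \<in> borel_measurable M"
    and Xdistr: "\<And>i. distr M borel (X i) = F"
    and Xindep: "prob_space.indep_vars M (\<lambda>_. borel) X UNIV"
    and Tmeas: "\<And>n. T n \<in> borel_measurable M"
    and I: "\<exists>C::real. \<forall>\<^sub>F n in sequentially.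
              (\<integral>\<^sup>+\<omega>. ennreal (norm (T n \<omega> - t) ^ 4) \<partial>M) \<le> ennreal (C / (real n)\<^sup>2)"
    and II: "(\<integral>\<^sup>+x. (if x = t then \<infinity> else ennreal (norm (x - t) powr (-3/2))) \<partial>F) < \<infinity>"
    and Xi_sym: "transpose \<Xi> = \<Xi>"
    and III: "conv_distr_normal M
              (\<lambda>n \<omega>. sqrt (real n) *\<^sub>R stack (T n \<omega> - t)
                        (vecm (S_emp X n (\<lambda>_. t) \<omega> - S_pop F t))) \<Xi>"
  shows "conv_distr_normal M
           (\<lambda>n \<omega>. sqrt (real n) *\<^sub>R vecm (S_emp X n (T n) \<omega> - S_pop F t))
           (A_mat (B_mat F t) ** \<Xi> ** transpose (A_mat (B_mat F t)))"
proof -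
  interpret Mp: prob_space M by (rule M)
  note [measurable] = Xmeas Tmeas
  note IF = int_facts[OF F(1) F(2) II]
  define A where "A = A_mat (B_mat F t)"
  define W where "W n \<omega> = sqrt (real n) *\<^sub>R stack (T n \<omega> - t) (vecm (S_emp X n (\<lambda>_. t) \<omega> - S_pop F t))" for n \<omega>
  define Z where "Z n \<omega> = sqrt (real n) *\<^sub>R vecm (S_emp X n (T n) \<omega> - S_pop F t)" for n \<omega>
  define R where "R n \<omega> = Z n \<omega> - A *v W n \<omega>" for n \<omega>
  have Sm[measurable]: "S_emp X n u \<in> borel_measurable M" if [measurable]: "u \<in> borel_measurable M" for n u
  proof -
    have "(\<lambda>\<omega>. (1 / real n) *\<^sub>R (\<Sum>i\<in>{1..n}. sign_outer (X i \<omega> - u \<omega>))) \<in> borel_measurable M" by measurable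
    moreover have "S_emp X n u = (\<lambda>\<omega>. (1 / real n) *\<^sub>R (\<Sum>i\<in>{1..n}. sign_outer (X i \<omega> - u \<omega>)))"
      by (intro ext) (simp add: S_emp_def)
    ultimately show ?thesis by simp
  qed
  have Wm[measurable]: "W n \<in> borel_measurable M" for n
  proof -
    have "(\<lambda>\<omega>. sqrt (real n) *\<^sub>R stack (T n \<omega> - t) (vecm (S_emp X n (\<lambda>_. t) \<omega> - S_pop F t))) \<in> borel_measurable M"
      by measurable
    moreover have "W n = (\<lambda>\<omega>. sqrt (real n) *\<^sub>R stack (T n \<omega> - t) (vecm (S_emp X n (\<lambda>_. t) \<omega> - S_pop F t)))"
      by (intro ext) (simp add: W_def)
    ultimately show ?thesis by simp
  qed
  have Zm[measurable]: "Z n \<in> borel_measurable M" for n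
  proof -
    have "(\<lambda>\<omega>. sqrt (real n) *\<^sub>R vecm (S_emp X n (T n) \<omega> - S_pop F t)) \<in> borel_measurable M"
      by measurable
    moreover have "Z n = (\<lambda>\<omega>. sqrt (real n) *\<^sub>R vecm (S_emp X n (T n) \<omega> - S_pop F t))"
      by (intro ext) (simp add: Z_def)
    ultimately show ?thesis by simp
  qed
  have Rm[measurable]: "R n \<in> borel_measurable M" for n
  proof -
    have "(\<lambda>\<omega>. Z n \<omega> - A *v W n \<omega>) \<in> borel_measurable M" by measurable
    moreover have "R n = (\<lambda>\<omega>. Z n \<omega> - A *v W n \<omega>)" by (intro ext) (simp add: R_def)
    ultimately show ?thesis by simp
  qed
  have Weq: "W = (\<lambda>n \<omega>. sqrt (real n) *\<^sub>R stack (T n \<omega> - t) (vecm (S_emp X n (\<lambda>_. t) \<omega> - S_pop F t)))"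
    by (intro ext) (simp add: W_def)
  have convW: "conv_distr_normal M W \<Xi>" unfolding Weq by (rule III)
  have convAW: "conv_distr_normal M (\<lambda>n \<omega>. A *v W n \<omega>) (A ** \<Xi> ** transpose A)"
    by (rule conv_linear[OF convW])
  have small: "small_prob M R"
    unfolding small_prob_def
  proof (intro allI impI)
    fix e \<gamma> :: real assume e: "e > 0" and \<gamma>: "\<gamma> > 0"
    have g4: "\<gamma> / 4 > 0" using \<gamma> by simp
    obtain K0 where K0: "\<forall>\<^sub>F n in sequentially. measure M {\<omega>\<in>space M. K0 \<le> norm (W n \<omega>)} \<le> \<gamma> / 4"
      using tight_conv[OF M Wm convW g4] by blast
    define K1 where "K1 = max K0 1"
    have K1: "K1 \<ge> 1" "K0 \<le> K1" by (auto simp: K1_def)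
    define h where "h x = norm (x - t) powr (-3/2)" for x :: "real^'p"
    have hm[measurable]: "h \<in> borel_measurable borel" unfolding h_def by measurable
    define E3 where "E3 = (\<integral>x. h x \<partial>F)"
    have E30: "E3 \<ge> 0" unfolding E3_def h_def by (intro integral_nonneg_AE) auto
    define K2 where "K2 = 4 * (E3 + 1) / \<gamma>"
    have K2: "K2 > 0" using E30 \<gamma> by (simp add: K2_def)
    define \<eta> where "\<eta> = e / (2 * K1)"
    have \<eta>: "\<eta> > 0" using e K1 by (simp add: \<eta>_def)
    have \<eta>K1: "\<eta> * K1 = e / 2" using K1 by (simp add: \<eta>_def)
    define V where "V n \<omega> = (1 / real n) * (\<Sum>i\<in>{1..n}. norm (X i \<omega> - t) powr (-3/2))" for n \<omega>
    define mean where "mean n \<omega> = (1 / real n) *\<^sub>R (\<Sum>i\<in>{1..n}. Dmat (X i \<omega> - t))" for n \<omega>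
    have Vm[measurable]: "V n \<in> borel_measurable M" for n
    proof -
      have "(\<lambda>\<omega>. (1 / real n) * (\<Sum>i\<in>{1..n}. norm (X i \<omega> - t) powr (-3/2))) \<in> borel_measurable M" by measurable
      moreover have "V n = (\<lambda>\<omega>. (1 / real n) * (\<Sum>i\<in>{1..n}. norm (X i \<omega> - t) powr (-3/2)))" by (intro ext) (simp add: V_def)
      ultimately show ?thesis by simp
    qed
    have meanm[measurable]: "mean n \<in> borel_measurable M" for n
    proof -
      have "(\<lambda>\<omega>. (1 / real n) *\<^sub>R (\<Sum>i\<in>{1..n}. Dmat (X i \<omega> - t))) \<in> borel_measurable M" by measurable
      moreover have "mean n = (\<lambda>\<omega>. (1 / real n) *\<^sub>R (\<Sum>i\<in>{1..n}. Dmat (X i \<omega> - t)))" by (intro ext) (simp add: mean_def)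
      ultimately show ?thesis by simp
    qed
    have VM: "measure M {\<omega>\<in>space M. K2 \<le> V n \<omega>} \<le> \<gamma> / 4" if n: "n \<ge> 1" for n
    proof -
      have hX: "integrable M (\<lambda>\<omega>. h (X i \<omega>))" for i
      proof -
        have "integrable (distr M borel (X i)) h" using IF(1) Xdistr[of i] by (simp add: h_def[abs_def])
        then show ?thesis by (subst (asm) integrable_distr_eq) auto
      qed
      have hXi: "(\<integral>\<omega>. h (X i \<omega>) \<partial>M) = E3" for i
        using integral_distr[OF Xmeas[of i] hm] Xdistr[of i] by (simp add: E3_def)
      have Vi: "integrable M (V n)" unfolding V_def using hX by (simp add: h_def)
      have "measure M {\<omega>\<in>space M. K2 \<le> V n \<omega>} \<le> (\<integral>\<omega>. V n \<omega> \<partial>M) / K2"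
      proof -
        have V0: "AE \<omega> in M. 0 \<le> V n \<omega>" by (intro AE_I2) (simp add: V_def sum_nonneg)
        show ?thesis by (rule integral_Markov_inequality_measure[where A="space M"]) (use Vi K2 V0 in auto)
      qed
      also have "(\<integral>\<omega>. V n \<omega> \<partial>M) = E3"
      proof -
        have "(\<integral>\<omega>. V n \<omega> \<partial>M) = (1 / real n) * (\<Sum>i\<in>{1..n}. \<integral>\<omega>. h (X i \<omega>) \<partial>M)"
          unfolding V_def using hX by (simp add: h_def integral_sum)
        also have "\<dots> = E3" using n by (simp add: hXi)
        finally show ?thesis .
      qed
      also have "E3 / K2 \<le> \<gamma> / 4"
      proof -
        have "E3 / K2 = (\<gamma> / 4) * (E3 / (E3 + 1))" using E30 \<gamma> by (simp add: K2_def field_simps)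
        also have "\<dots> \<le> (\<gamma> / 4) * 1" using E30 \<gamma> by (intro mult_left_mono) auto
        finally show ?thesis by simp
      qed
      finally show ?thesis .
    qed
    have WL: "\<forall>\<^sub>F n in sequentially. measure M {\<omega>\<in>space M. \<eta> \<le> norm (mean n \<omega> - B_mat F t)} \<le> \<gamma> / 4"
    proof -
      have gm: "(\<lambda>x. Dmat (x - t)) \<in> borel_measurable borel" by measurable
      from wlln_eucl[OF M Xmeas Xdistr Xindep gm IF(4) \<eta> g4]
      show ?thesis by (simp add: mean_def IF(5))
    qed
    have TL: "\<forall>\<^sub>F n in sequentially. 16 * (K1 / sqrt (real n)) powr (3/2) * sqrt (real n) * K2 < e / 2"
      using K1 e by (intro tau_lim) auto
    have AEnz: "AE \<omega> in M. \<forall>i. X i \<omega> \<noteq> t"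
    proof -
      have "AE \<omega> in M. X i \<omega> \<noteq> t" for i
      proof -
        have "AE x in distr M borel (X i). x \<noteq> t" unfolding Xdistr[of i] by (rule IF(3))
        then show ?thesis by (subst (asm) AE_distr_iff) auto
      qed
      then show ?thesis by (simp add: AE_all_countable)
    qed
    show "\<forall>\<^sub>F n in sequentially. measure M {\<omega>\<in>space M. e \<le> norm (R n \<omega>)} \<le> \<gamma>"
      using K0 WL TL eventually_ge_at_top[of 1]
    proof eventually_elim
      case (elim n)
      define B1 where "B1 = {\<omega>\<in>space M. K0 \<le> norm (W n \<omega>)}"
      define B2 where "B2 = {\<omega>\<in>space M. K2 \<le> V n \<omega>}"
      define B3 where "B3 = {\<omega>\<in>space M. \<eta> \<le> norm (mean n \<omega> - B_mat F t)}"
      have B1m: "B1 \<in> sets M" unfolding B1_def by measurable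
      have B2m: "B2 \<in> sets M" unfolding B2_def by measurable
      have B3m: "B3 \<in> sets M" unfolding B3_def by measurable
      have "AE \<omega> in M. \<omega> \<in> {\<omega>\<in>space M. e \<le> norm (R n \<omega>)} \<longrightarrow> \<omega> \<in> B1 \<union> B2 \<union> B3"
        using AEnz
      proof (rule AE_mp, intro AE_I2 impI)
        fix \<omega> assume \<omega>: "\<omega> \<in> space M" and nz: "\<forall>i. X i \<omega> \<noteq> t"
          and big: "\<omega> \<in> {\<omega>\<in>space M. e \<le> norm (R n \<omega>)}"
        show "\<omega> \<in> B1 \<union> B2 \<union> B3"
        proof (rule ccontr)
          assume "\<omega> \<notin> B1 \<union> B2 \<union> B3"
          then have w: "norm (W n \<omega>) < K0" and v: "V n \<omega> < K2" and m: "norm (mean n \<omega> - B_mat F t) < \<eta>"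
            using \<omega> by (auto simp: B1_def B2_def B3_def not_le)
          have U: "sqrt (real n) * norm (T n \<omega> - t) \<le> K1"
          proof -
            have "sqrt (real n) * norm (T n \<omega> - t) \<le> sqrt (real n) * norm (stack (T n \<omega> - t) (vecm (S_emp X n (\<lambda>_. t) \<omega> - S_pop F t)))"
              by (intro mult_left_mono norm_stack_ge) auto
            also have "\<dots> = norm (W n \<omega>)" by (simp add: W_def)
            finally show ?thesis using w K1 by linarith
          qed
          have Req: "R n \<omega> = sqrt (real n) *\<^sub>R vecm ((1 / real n) *\<^sub>R (\<Sum>i\<in>{1..n}. rho (X i \<omega> - t) (T n \<omega> - t)))
              + sqrt (real n) *\<^sub>R (((1 / real n) *\<^sub>R (\<Sum>i\<in>{1..n}. Dmat (X i \<omega> - t)) - B_mat F t) *v (T n \<omega> - t))"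
            unfolding R_def Z_def W_def A_def by (rule R_ident[OF elim(4)])
          have "norm (R n \<omega>) \<le> 16 * (K1 / sqrt (real n)) powr (3/2) * sqrt (real n) * K2 + \<eta> * K1"
            unfolding Req
            by (rule R_bound[where Tn="T n" and \<omega>=\<omega> and X=X and t=t, OF elim(4) _ U]) (use nz v m K1 in \<open>auto simp: V_def mean_def\<close>)
          then have "norm (R n \<omega>) < e" using elim(3) \<eta>K1 by linarith
          then show False using big by auto
        qed
      qed
      then have "measure M {\<omega>\<in>space M. e \<le> norm (R n \<omega>)} \<le> measure M (B1 \<union> B2 \<union> B3)"
        using B1m B2m B3m by (intro Mp.finite_measure_mono_AE) auto
      also have "\<dots> \<le> measure M B1 + measure M B2 + measure M B3"
        using B1m B2m B3m by (meson add_right_mono measure_Un_le order_trans sets.Un)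
      also have "\<dots> \<le> \<gamma> / 4 + \<gamma> / 4 + \<gamma> / 4"
        using elim(1,2) VM[OF elim(4)] by (simp add: B1_def B2_def B3_def)
      also have "\<dots> \<le> \<gamma>" using \<gamma> by simp
      finally show ?case .
    qed
  qed
  have "conv_distr_normal M (\<lambda>n \<omega>. A *v W n \<omega> + R n \<omega>) (A ** \<Xi> ** transpose A)"
    by (rule slutsky[OF M _ Rm convAW small]) measurable
  moreover have "(\<lambda>n \<omega>. A *v W n \<omega> + R n \<omega>) = (\<lambda>n \<omega>. sqrt (real n) *\<^sub>R vecm (S_emp X n (T n) \<omega> - S_pop F t))"
    by (intro ext) (simp add: R_def Z_def)
  ultimately show ?thesis by (simp add: A_def)
qed

end
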